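(* Let $q\in L^\infty(0,1)$, let $(u_0,u_1)\in L^2(0,1)\times L^2(0,1)$, and fix $T>0$. Let $u\in C([0,T];L^2(0,1))$ be the unique classical solution of $$\partial_t^2u-\partial_x^2u+q(x)u=0\ \text{on }[0,T]\times(0,1),\quad u(0,x)=u_0(x),\ \partial_tu(0,x)=u_1(x),\quad u(t,0)=0=u(t,1).$$ Then for any families $(q_\varepsilon)$, $(u_{0,\varepsilon})$, $(u_{1,\varepsilon})$ with $\|q-q_\varepsilon\|_{L^\infty}\to0$, $\|u_0-u_{0,\varepsilon}\|_{L^2}\to0$, $\|u_1-u_{1,\varepsilon}\|_{L^2}\to0$ as $\varepsilon\to0$, any representative $(u_\varepsilon)$ of the very weak solution, i.e. the solutions $u_\varepsilon$ of $\partial_t^2u_\varepsilon-\partial_x^2u_\varepsilon+q_\varepsilon u_\varepsilon=0$, $u_\varepsilon(0,\cdot)=u_{0,\varepsilon}$, $\partial_tu_\varepsilon(0,\cdot)=u_{1,\varepsilon}$, $u_\varepsilon(t,0)=0=u_\varepsilon(t,1)$, satisfies $$\sup_{0\le t\le T}\|u(t,\cdot)-u_\varepsilon(t,\cdot)\|_{L^2}\to0\quad\text{as }\varepsilon\to0.$$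
   Context: A very weak solution of the problem is a net $(u_\varepsilon)_{\varepsilon\in(0,1]}$ for which there exist an $L^\infty$-moderate regularisation $(q_\varepsilon)$ of $q$ (i.e. $\|q_\varepsilon\|_{L^\infty}\le C\varepsilon^{-N}$ for some $C>0$, $N\in\mathbb{N}_0$) and $L^2$-moderate regularisations $(u_{0,\varepsilon}),(u_{1,\varepsilon})$ of $u_0,u_1$ (i.e. $L^2$ norms bounded by $C\varepsilon^{-N}$) such that $u_\varepsilon$ solves the regularised problem with $q_\varepsilon,u_{0,\varepsilon},u_{1,\varepsilon}$ in place of $q,u_0,u_1$, and $(u_\varepsilon)$, $(\partial_tu_\varepsilon)$ are $L^2$-moderate uniformly in $t\in[0,T]$; such a net is called a representative of the very weak solution. *)

theory Defs
  imports "HOL-Analysis.Analysis" "HOL-Probability.Essential_Supremum"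
begin

text \<open>Functions on the spatial interval (0,1) (we use the closed interval; the
endpoints are a null set).\<close>

definition L2_01 :: "(real \<Rightarrow> real) \<Rightarrow> bool" where
  "L2_01 f \<longleftrightarrow> f \<in> borel_measurable (lebesgue_on {0..1}) \<and>
                 integrable (lebesgue_on {0..1}) (\<lambda>x. (f x)^2)"

definition L2norm_01 :: "(real \<Rightarrow> real) \<Rightarrow> real" where
  "L2norm_01 f = sqrt (LINT x|lebesgue_on {0..1}. (f x)^2)"

definition Linf_01 :: "(real \<Rightarrow> real) \<Rightarrow> bool" where
  "Linf_01 f \<longleftrightarrow> f \<in> borel_measurable (lebesgue_on {0..1}) \<and>
                  (\<exists>C. AE x in lebesgue_on {0..1}. \<bar>f x\<bar> \<le> C)"

definition Linfnorm_01 :: "(real \<Rightarrow> real) \<Rightarrow> ereal" where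
  "Linfnorm_01 f = esssup (lebesgue_on {0..1}) (\<lambda>x. ereal \<bar>f x\<bar>)"

definition inner_01 :: "(real \<Rightarrow> real) \<Rightarrow> (real \<Rightarrow> real) \<Rightarrow> real" where
  "inner_01 f g = (LINT x|lebesgue_on {0..1}. f x * g x)"

text \<open>Solution of  u_tt - u_xx + q u = 0 on [0,T] x (0,1), u(0)=u0, u_t(0)=u1,
  u(t,0)=0=u(t,1), in C([0,T];L^2(0,1)), in the standard weak sense:
  for every test function v in C^2[0,1] with v(0)=v(1)=0 the scalar function
  w(t) = <u(t),v> is twice differentiable on [0,T] with
  w'' = <u(t), v'' - q v>  (obtained by integrating by parts twice in x,
  the Dirichlet condition killing the boundary terms), w(0)=<u0,v>, w'(0)=<u1,v>.
  Here u t x is the value at time t and position x.\<close>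

definition wave_sol ::
  "real \<Rightarrow> (real \<Rightarrow> real) \<Rightarrow> (real \<Rightarrow> real) \<Rightarrow> (real \<Rightarrow> real) \<Rightarrow> (real \<Rightarrow> real \<Rightarrow> real) \<Rightarrow> bool"
  where
  "wave_sol T q u0 u1 u \<longleftrightarrow>
     (\<forall>t\<in>{0..T}. L2_01 (u t)) \<and>
     (\<forall>t\<in>{0..T}. ((\<lambda>s. L2norm_01 (\<lambda>x. u s x - u t x)) \<longlongrightarrow> 0) (at t within {0..T})) \<and>
     (\<forall>v v' v''.
        (\<forall>x. (v has_real_derivative v' x) (at x)) \<and>
        (\<forall>x. (v' has_real_derivative v'' x) (at x)) \<and>
        continuous_on UNIV v'' \<and> v 0 = 0 \<and> v 1 = 0 \<longrightarrow>
        (\<exists>w' w''.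
           (\<forall>t\<in>{0..T}. ((\<lambda>s. inner_01 (u s) v) has_real_derivative w' t) (at t within {0..T})) \<and>
           (\<forall>t\<in>{0..T}. (w' has_real_derivative w'' t) (at t within {0..T})) \<and>
           (\<forall>t\<in>{0..T}. w'' t = inner_01 (u t) (\<lambda>x. v'' x - q x * v x)) \<and>
           inner_01 (u 0) v = inner_01 u0 v \<and>
           w' 0 = inner_01 u1 v))"

end

theory Submission
  imports Defs
begin

abbreviation "M01 \<equiv> lebesgue_on {0..1::real}"

lemma abs_le_sq: "\<bar>a::real\<bar> \<le> 1 + a^2"
proof -
  have "0 \<le> (\<bar>a\<bar> - 1)^2" by simp
  hence "0 \<le> \<bar>a\<bar>^2 - 2*\<bar>a\<bar> + 1" by (simp add: power2_eq_square algebra_simps)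
  thus ?thesis by (simp add: power2_abs)
qed

lemma fm01: "finite_measure M01"
  by (rule finite_measure_lebesgue_on) auto

lemma meas_cont01: "continuous_on {0..1} f \<Longrightarrow> (f::real\<Rightarrow>real) \<in> borel_measurable M01"
  by (rule continuous_imp_measurable_on_sets_lebesgue) auto

lemma L2_int: assumes "L2_01 f" shows "integrable M01 f"
proof -
  have "integrable M01 (\<lambda>x. 1 + (f x)^2)" using assms unfolding L2_01_def by auto
  moreover have "f \<in> borel_measurable M01" using assms unfolding L2_01_def by auto
  moreover have "AE x in M01. norm (f x) \<le> norm (1 + (f x)^2)"
    using abs_le_sq by auto
  ultimately show ?thesis by (rule Bochner_Integration.integrable_bound)
qed


definition phi :: "nat \<Rightarrow> real \<Rightarrow> real" where
  "phi n x = sin (real n * pi * x)"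

lemma int_cos_int:
  fixes j :: int
  shows "((\<lambda>x. cos (of_int j * pi * x)) has_integral (if j = 0 then 1 else 0)) {0..1}"
proof (cases "j = 0")
  case True
  then show ?thesis using has_integral_const_real[of "1::real" 0 1] by simp
next
  case False
  let ?k = "of_int j * pi"
  have k0: "?k \<noteq> 0" using False by simp
  have "((\<lambda>x. cos (?k * x)) has_integral (sin (?k * 1) / ?k - sin (?k * 0) / ?k)) {0..1}"
  proof (rule fundamental_theorem_of_calculus)
    show "0 \<le> (1::real)" by simp
    fix x :: real assume "x \<in> {0..1}"
    have "((\<lambda>x. sin (?k * x) / ?k) has_real_derivative (cos (?k * x) * ?k / ?k)) (at x within {0..1})"
      by (auto intro!: derivative_eq_intros)
    then show "((\<lambda>x. sin (?k * x) / ?k) has_vector_derivative cos (?k * x)) (at x within {0..1})"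
      using k0 by (simp add: has_real_derivative_iff_has_vector_derivative)
  qed
  moreover have "sin (?k * 1) = 0" by (metis mult.commute mult_1_right sin_npi_int)
  ultimately show ?thesis using False by simp
qed

lemma phi_cont: "continuous_on A (phi n)"
  unfolding phi_def by (auto intro!: continuous_intros)

lemma phi_prod: "phi n x * phi m x = (cos (of_int (int n - int m) * pi * x) - cos (of_int (int n + int m) * pi * x)) / 2"
  unfolding phi_def sin_times_sin by (simp add: algebra_simps)

lemma phi_orth:
  "(LINT x|M01. phi n x * phi m x) = (if n = m \<and> n \<noteq> 0 then 1/2 else 0)"
proof -
  have i: "integrable M01 (\<lambda>x. phi n x * phi m x)"
    by (rule continuous_imp_integrable_real) (auto intro!: continuous_intros simp: phi_def)
  have "(LINT x|M01. phi n x * phi m x) = integral {0..1} (\<lambda>x. phi n x * phi m x)"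
    by (rule lebesgue_integral_eq_integral[OF i]) auto
  also have "\<dots> = integral {0..1} (\<lambda>x. (cos (of_int (int n - int m) * pi * x) - cos (of_int (int n + int m) * pi * x)) / 2)"
    by (simp add: phi_prod)
  also have "\<dots> = ((if int n - int m = 0 then 1 else 0) - (if int n + int m = 0 then 1 else 0)) / 2"
    by (intro integral_unique has_integral_divide has_integral_diff int_cos_int)
  also have "\<dots> = (if n = m \<and> n \<noteq> 0 then 1/2 else 0)" by auto
  finally show ?thesis .
qed

lemma L2_meas: "L2_01 f \<Longrightarrow> f \<in> borel_measurable M01"
  unfolding L2_01_def by auto
lemma L2_sq: "L2_01 f \<Longrightarrow> integrable M01 (\<lambda>x. (f x)^2)"
  unfolding L2_01_def by auto

lemma abs_mult_le_sq: "\<bar>(a::real) * b\<bar> \<le> a^2 + b^2"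
proof -
  have "0 \<le> (\<bar>a\<bar> - \<bar>b\<bar>)^2" by simp
  hence "2 * (\<bar>a\<bar> * \<bar>b\<bar>) \<le> a^2 + b^2" by (simp add: power2_eq_square algebra_simps abs_mult_self)
  moreover have "0 \<le> \<bar>a\<bar> * \<bar>b\<bar>" by simp
  moreover have "\<bar>a * b\<bar> = \<bar>a\<bar> * \<bar>b\<bar>" by (simp add: abs_mult)
  ultimately show ?thesis by linarith
qed

lemma int_prod: assumes "L2_01 f" "L2_01 g" shows "integrable M01 (\<lambda>x. f x * g x)"
proof -
  have "integrable M01 (\<lambda>x. (f x)^2 + (g x)^2)" using assms by (auto intro!: L2_sq)
  moreover have "(\<lambda>x. f x * g x) \<in> borel_measurable M01" using assms by (intro borel_measurable_times L2_meas)
  moreover have "AE x in M01. norm (f x * g x) \<le> norm ((f x)^2 + (g x)^2)"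
    using abs_mult_le_sq by auto
  ultimately show ?thesis by (rule Bochner_Integration.integrable_bound)
qed

lemma L2_add: assumes "L2_01 f" "L2_01 g" shows "L2_01 (\<lambda>x. f x + g x)"
proof -
  have "integrable M01 (\<lambda>x. (f x)^2 + 2 * (f x * g x) + (g x)^2)"
    using assms by (intro Bochner_Integration.integrable_add integrable_mult_right L2_sq int_prod)
  moreover have "(\<lambda>x. f x + g x) \<in> borel_measurable M01" using assms by (intro borel_measurable_add L2_meas)
  moreover have eq: "(\<lambda>x. (f x + g x)^2) = (\<lambda>x. (f x)^2 + 2 * (f x * g x) + (g x)^2)"
    by (auto simp: power2_sum fun_eq_iff)
  ultimately show ?thesis unfolding L2_01_def by (simp only: eq)
qed

lemma L2_cmult: assumes "L2_01 f" shows "L2_01 (\<lambda>x. c * f x)"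
proof -
  have "(\<lambda>x. c * f x) \<in> borel_measurable M01" using assms by (intro borel_measurable_times borel_measurable_const L2_meas)
  then show ?thesis using assms unfolding L2_01_def by (simp add: power_mult_distrib)
qed

lemma L2_diff: assumes "L2_01 f" "L2_01 g" shows "L2_01 (\<lambda>x. f x - g x)"
  using L2_add[OF assms(1) L2_cmult[OF assms(2), of "-1"]] by simp

lemma L2_cont: assumes "continuous_on {0..1} f" shows "L2_01 f"
  unfolding L2_01_def using assms
  by (auto intro!: meas_cont01 continuous_imp_integrable_real continuous_intros)

lemma L2_bmult: assumes "L2_01 f" "g \<in> borel_measurable M01" "AE x in M01. \<bar>g x\<bar> \<le> C"
  shows "L2_01 (\<lambda>x. g x * f x)"
proof -
  have "integrable M01 (\<lambda>x. C^2 * (f x)^2)" using assms by (auto intro!: L2_sq)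
  moreover have "(\<lambda>x. (g x * f x)^2) \<in> borel_measurable M01" using L2_meas[OF assms(1)] assms(2) by measurable
  moreover have "AE x in M01. norm ((g x * f x)^2) \<le> norm (C^2 * (f x)^2)"
    using assms(3)
  proof eventually_elim
    case (elim x)
    have "(g x)^2 \<le> C^2" using elim by (metis abs_ge_zero abs_le_square_iff order_trans power2_abs abs_ge_self power_mono)
    then have "(g x)^2 * (f x)^2 \<le> C^2 * (f x)^2" by (simp add: mult_right_mono)
    then show ?case by (simp add: power_mult_distrib)
  qed
  ultimately have "integrable M01 (\<lambda>x. (g x * f x)^2)" by (rule Bochner_Integration.integrable_bound)
  moreover have "(\<lambda>x. g x * f x) \<in> borel_measurable M01" by (intro borel_measurable_times assms(2) L2_meas[OF assms(1)])
  ultimately show ?thesis unfolding L2_01_def by simp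
qed

lemma L2_phi: "L2_01 (phi n)"
  by (rule L2_cont) (rule phi_cont)

lemma phi0 [simp]: "phi 0 x = 0" by (simp add: phi_def)

lemma norm_sq: "L2norm_01 f ^ 2 = (LINT x|M01. (f x)^2)"
  unfolding L2norm_01_def by (simp add: integral_nonneg_AE)

lemma expansion:
  assumes g: "L2_01 g"
  shows "(LINT x|M01. (g x - (\<Sum>n<N. c n * phi n x))^2)
       = (LINT x|M01. (g x)^2) - 2 * (\<Sum>n<N. c n * (LINT x|M01. g x * phi n x))
         + (\<Sum>n<N. (c n)^2 * (if n \<noteq> 0 then 1/2 else 0))"
proof -
  have ip: "\<And>n. integrable M01 (\<lambda>x. g x * phi n x)" using g L2_phi int_prod by blast
  have ipp: "\<And>n m. integrable M01 (\<lambda>x. phi n x * phi m x)" using L2_phi int_prod by blast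
  have e: "(g x - (\<Sum>n<N. c n * phi n x))^2 = (g x)^2 - 2 * (\<Sum>n<N. c n * (g x * phi n x))
          + (\<Sum>n<N. \<Sum>m<N. (c n * c m) * (phi n x * phi m x))" for x
    by (simp add: power2_eq_square algebra_simps sum_distrib_left sum_distrib_right sum_product
        sum_subtractf)
  have "(LINT x|M01. (g x - (\<Sum>n<N. c n * phi n x))^2) =
     (LINT x|M01. (g x)^2) - 2 * (\<Sum>n<N. c n * (LINT x|M01. g x * phi n x))
         + (\<Sum>n<N. \<Sum>m<N. (c n * c m) * (LINT x|M01. phi n x * phi m x))"
    unfolding e using ip ipp L2_sq[OF g]
    by (simp add: Bochner_Integration.integral_sum integral_mult_right_zero)
  also have "(\<Sum>n<N. \<Sum>m<N. (c n * c m) * (LINT x|M01. phi n x * phi m x))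
      = (\<Sum>n<N. (c n)^2 * (if n \<noteq> 0 then 1/2 else 0))"
    unfolding phi_orth by (auto simp: power2_eq_square if_distrib cong: if_cong intro!: sum.cong)
  finally show ?thesis .
qed

lemma coef0: "(LINT x|M01. g x * phi 0 x) = 0" by simp

lemma bessel:
  assumes g: "L2_01 g"
  shows "(\<Sum>n<N. 2 * (LINT x|M01. g x * phi n x)^2) \<le> (LINT x|M01. (g x)^2)"
proof -
  define b where "b n = (LINT x|M01. g x * phi n x)" for n
  have "0 \<le> (LINT x|M01. (g x - (\<Sum>n<N. (2 * b n) * phi n x))^2)"
    by (simp add: integral_nonneg_AE)
  also have "\<dots> = (LINT x|M01. (g x)^2) - (\<Sum>n<N. 2 * (b n)^2)"
  proof -
    have h: "(2 * b n)^2 * (if n \<noteq> 0 then 1/2 else 0) = 2 * (b n)^2" for n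
      by (cases "n = 0") (auto simp: b_def power2_eq_square)
    show ?thesis unfolding expansion[OF g] b_def[symmetric] h
      by (simp add: power2_eq_square sum_distrib_left mult_ac)
  qed
  finally show ?thesis unfolding b_def by simp
qed

lemma best_approx:
  assumes g: "L2_01 g"
  shows "(LINT x|M01. (g x)^2) \<le> (LINT x|M01. (g x - (\<Sum>n<N. c n * phi n x))^2)
           + (\<Sum>n<N. 2 * (LINT x|M01. g x * phi n x)^2)"
proof -
  define b where "b n = (LINT x|M01. g x * phi n x)" for n
  have "2 * c n * b n - (c n)^2 * (if n \<noteq> 0 then 1/2 else 0) \<le> 2 * (b n)^2" for n
  proof (cases "n = 0")
    case True then show ?thesis by (simp add: b_def)
  next
    case False
    have "0 \<le> 2 * (b n - c n / 2)^2" by simp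
    then show ?thesis using False by (simp add: power2_eq_square algebra_simps)
  qed
  hence "(\<Sum>n<N. 2 * c n * b n - (c n)^2 * (if n \<noteq> 0 then 1/2 else 0)) \<le> (\<Sum>n<N. 2 * (b n)^2)"
    by (intro sum_mono) auto
  then show ?thesis unfolding expansion[OF g] b_def[symmetric]
    by (simp add: sum_subtractf sum_distrib_left mult.assoc)
qed

definition SP :: "(real \<Rightarrow> real) \<Rightarrow> bool" where
  "SP f \<longleftrightarrow> (\<exists>N c. \<forall>x. f x = (\<Sum>n<N. c n * phi n x))"

lemma sum_pad:
  assumes "N \<le> N'"
  shows "(\<Sum>n<N. c n * phi n x) = (\<Sum>n<N'. (if n < N then c n else 0) * phi n x)"
proof -
  have "(\<Sum>n<N'. (if n < N then c n else 0) * phi n x) = (\<Sum>n\<in>{..<N}. (if n < N then c n else 0) * phi n x)"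
    using assms by (intro sum.mono_neutral_right) auto
  then show ?thesis by simp
qed

lemma SP_add: assumes "SP f" "SP g" shows "SP (\<lambda>x. f x + g x)"
proof -
  obtain N1 c1 where 1: "\<forall>x. f x = (\<Sum>n<N1. c1 n * phi n x)" using assms(1) unfolding SP_def by blast
  obtain N2 c2 where 2: "\<forall>x. g x = (\<Sum>n<N2. c2 n * phi n x)" using assms(2) unfolding SP_def by blast
  let ?N = "max N1 N2"
  have "f x + g x = (\<Sum>n<?N. ((if n < N1 then c1 n else 0) + (if n < N2 then c2 n else 0)) * phi n x)" for x
    using 1 2 by (simp add: sum_pad[of N1 ?N c1] sum_pad[of N2 ?N c2] sum.distrib distrib_right)
  then show ?thesis unfolding SP_def
    by (intro exI[of _ ?N] exI[of _ "\<lambda>n. (if n < N1 then c1 n else 0) + (if n < N2 then c2 n else 0)"]) blast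
qed

lemma SP_cmult: assumes "SP f" shows "SP (\<lambda>x. a * f x)"
proof -
  obtain N c where 1: "\<forall>x. f x = (\<Sum>n<N. c n * phi n x)" using assms(1) unfolding SP_def by blast
  have "a * f x = (\<Sum>n<N. (a * c n) * phi n x)" for x
    using 1 by (simp add: sum_distrib_left mult.assoc)
  then show ?thesis unfolding SP_def by (intro exI[of _ N] exI[of _ "\<lambda>n. a * c n"]) blast
qed

lemma SP_zero: "SP (\<lambda>x. 0)"
  unfolding SP_def by (rule exI[of _ 0]) simp

lemma SP_sum: assumes "\<And>k. k \<in> A \<Longrightarrow> SP (f k)" shows "SP (\<lambda>x. \<Sum>k\<in>A. f k x)"
  using assms
proof (induction A rule: infinite_finite_induct)
  case (infinite A) then show ?case by (simp add: SP_zero)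
next
  case empty then show ?case by (simp add: SP_zero)
next
  case (insert k F)
  then show ?case by (simp add: SP_add)
qed

lemma SP_phi: "SP (phi m)"
proof -
  have "phi m x = (\<Sum>n<Suc m. (if n = m then 1 else 0) * phi n x)" for x
    by (simp add: if_distrib cong: if_cong)
  then show ?thesis unfolding SP_def by (intro exI[of _ "Suc m"] exI[of _ "\<lambda>n. if n = m then 1 else 0"]) blast
qed

lemma SP_cong: "SP f \<Longrightarrow> (\<And>x. f x = g x) \<Longrightarrow> SP g"
  by (metis ext)

lemma phi_cos: "phi (Suc k) x * cos (pi * x) = (phi (Suc (Suc k)) x + phi k x) / 2"
proof -
  let ?m = "Suc k"
  have "sin (real ?m * pi * x) * cos (pi * x) = (sin (real ?m * pi * x + pi * x) + sin (real ?m * pi * x - pi * x)) / 2"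
    by (rule sin_times_cos)
  moreover have "real ?m * pi * x + pi * x = real (Suc ?m) * pi * x" by (simp add: algebra_simps)
  moreover have "real ?m * pi * x - pi * x = real k * pi * x" by (simp add: algebra_simps)
  ultimately show ?thesis by (simp add: phi_def)
qed

lemma SP_mult_cos: assumes "SP f" shows "SP (\<lambda>x. f x * cos (pi * x))"
proof -
  obtain N c where 1: "\<forall>x. f x = (\<Sum>n<N. c n * phi n x)" using assms(1) unfolding SP_def by blast
  have "SP (\<lambda>x. \<Sum>n<N. c n * (phi n x * cos (pi * x)))"
  proof (rule SP_sum, rule SP_cmult)
    fix n
    show "SP (\<lambda>x. phi n x * cos (pi * x))"
    proof (cases n)
      case 0 then show ?thesis by (simp add: SP_zero)
    next
      case (Suc k)
      have "SP (\<lambda>x. (1/2) * (phi (Suc (Suc k)) x + phi k x))"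
        by (intro SP_cmult SP_add SP_phi)
      then show ?thesis unfolding Suc phi_cos by (rule SP_cong) simp
    qed
  qed
  then show ?thesis
    by (rule SP_cong) (simp add: 1 sum_distrib_right mult.assoc)
qed

definition yc :: "real \<Rightarrow> real" where "yc x = (1 - cos (pi * x)) / 2"

lemma SP_mult_y: assumes "SP f" shows "SP (\<lambda>x. f x * yc x)" "SP (\<lambda>x. f x * (1 - yc x))"
proof -
  have a: "SP (\<lambda>x. (1/2) * f x + (-1/2) * (f x * cos (pi * x)))"
    by (intro SP_add SP_cmult SP_mult_cos assms)
  show "SP (\<lambda>x. f x * yc x)" by (rule SP_cong[OF a]) (simp add: yc_def field_simps)
  have b: "SP (\<lambda>x. (1/2) * f x + (1/2) * (f x * cos (pi * x)))"
    by (intro SP_add SP_cmult SP_mult_cos assms)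
  show "SP (\<lambda>x. f x * (1 - yc x))" by (rule SP_cong[OF b]) (simp add: yc_def field_simps)
qed

lemma SP_mono: assumes "SP f" shows "SP (\<lambda>x. f x * (yc x)^k * (1 - yc x)^j)"
proof -
  have "SP (\<lambda>x. f x * (yc x)^k)"
  proof (induction k)
    case 0 then show ?case using assms by simp
  next
    case (Suc k)
    from SP_mult_y(1)[OF this] show ?case by (rule SP_cong) (simp add: algebra_simps)
  qed
  then show ?thesis
  proof (induction j)
    case 0 then show ?case by simp
  next
    case (Suc j)
    from SP_mult_y(2)[OF Suc.IH[OF Suc.prems]] show ?case by (rule SP_cong) (simp add: algebra_simps)
  qed
qed

lemma SP_cont: "SP f \<Longrightarrow> continuous_on A f"
  unfolding SP_def by (auto intro!: continuous_intros simp: phi_def)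

lemma unif_SP:
  assumes G: "continuous_on {0..1} G" and e: "e > 0"
  shows "\<exists>s. SP s \<and> (\<forall>x\<in>{0..1}. \<bar>phi 1 x * G x - s x\<bar> \<le> e)"
proof -
  define F where "F t = G (arccos (1 - 2 * t) / pi)" for t
  have "continuous_on {0..1} F"
    unfolding F_def
  proof (rule continuous_on_compose2[OF G])
    show "continuous_on {0..1} (\<lambda>t. arccos (1 - 2 * t) / pi)"
      by (intro continuous_intros continuous_on_arccos) auto
    show "(\<lambda>t. arccos (1 - 2 * t) / pi) ` {0..1} \<subseteq> {0..1}"
      using arccos_lbound arccos_ubound by (auto simp: divide_simps)
  qed
  from Bernstein_Weierstrass[OF this e] obtain N where
    N: "\<And>n t. N \<le> n \<Longrightarrow> t \<in> {0..1} \<Longrightarrow> \<bar>F t - (\<Sum>k\<le>n. F (k/n) * Bernstein n k t)\<bar> < e" by blast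
  define s where "s x = (\<Sum>k\<le>N. F (k/N) * (of_nat (N choose k) * (phi 1 x * (yc x)^k * (1 - yc x)^(N - k))))" for x
  have "SP s" unfolding s_def
    by (intro SP_sum SP_cmult SP_mono SP_phi)
  moreover have "\<bar>phi 1 x * G x - s x\<bar> \<le> e" if x: "x \<in> {0..1}" for x
  proof -
    have y: "yc x \<in> {0..1}" unfolding yc_def by auto
    have "1 - 2 * yc x = cos (pi * x)" unfolding yc_def by (simp add: field_simps)
    then have "arccos (1 - 2 * yc x) = pi * x" using x by (simp add: arccos_cos)
    then have FG: "F (yc x) = G x" unfolding F_def by simp
    have s: "s x = phi 1 x * (\<Sum>k\<le>N. F (k/N) * Bernstein N k (yc x))"
      unfolding s_def Bernstein_def by (simp add: sum_distrib_left algebra_simps)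
    have "\<bar>G x - (\<Sum>k\<le>N. F (k/N) * Bernstein N k (yc x))\<bar> < e"
      using N[OF order_refl y] FG by simp
    moreover have "\<bar>phi 1 x\<bar> \<le> 1" unfolding phi_def by simp
    ultimately have "\<bar>phi 1 x\<bar> * \<bar>G x - (\<Sum>k\<le>N. F (k/N) * Bernstein N k (yc x))\<bar> \<le> 1 * e"
      by (intro mult_mono) auto
    then show ?thesis unfolding s by (simp add: abs_mult[symmetric] algebra_simps)
  qed
  ultimately show ?thesis by blast
qed

definition SPapx :: "(real \<Rightarrow> real) \<Rightarrow> bool" where
  "SPapx g \<longleftrightarrow> (\<forall>e>0. \<exists>s. SP s \<and> (LINT x|M01. (g x - s x)^2) < e)"

lemma sq_tri: "((a::real) - c)^2 \<le> 2 * (a - b)^2 + 2 * (b - c)^2"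
proof -
  have "0 \<le> (a - 2*b + c)^2" by simp
  then show ?thesis by (simp add: power2_eq_square algebra_simps)
qed

lemma L2_SP: "SP s \<Longrightarrow> L2_01 s"
  by (rule L2_cont) (rule SP_cont)

lemma int_sq_diff: "L2_01 f \<Longrightarrow> L2_01 g \<Longrightarrow> integrable M01 (\<lambda>x. (f x - g x)^2)"
  using L2_diff L2_sq by blast

lemma apx_lim:
  assumes g: "L2_01 g" and H: "\<And>e. e > 0 \<Longrightarrow> \<exists>h. L2_01 h \<and> SPapx h \<and> (LINT x|M01. (g x - h x)^2) < e"
  shows "SPapx g"
  unfolding SPapx_def
proof (intro allI impI)
  fix e :: real assume e: "e > 0"
  obtain h where h: "L2_01 h" "SPapx h" "(LINT x|M01. (g x - h x)^2) < e/4" using H[of "e/4"] e by auto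
  obtain s where s: "SP s" "(LINT x|M01. (h x - s x)^2) < e/4" using h(2) e unfolding SPapx_def by (meson divide_pos_pos zero_less_numeral)
  have "(LINT x|M01. (g x - s x)^2) \<le> (LINT x|M01. 2 * (g x - h x)^2 + 2 * (h x - s x)^2)"
    by (intro integral_mono int_sq_diff L2_SP g h s Bochner_Integration.integrable_add integrable_mult_right sq_tri)
  also have "\<dots> = 2 * (LINT x|M01. (g x - h x)^2) + 2 * (LINT x|M01. (h x - s x)^2)"
    by (simp add: int_sq_diff L2_SP g h s)
  also have "\<dots> < e" using h(3) s(2) by simp
  finally show "\<exists>s. SP s \<and> (LINT x|M01. (g x - s x)^2) < e" using s(1) by blast
qed

lemma apx_SP: "SP s \<Longrightarrow> SPapx s"
  unfolding SPapx_def by (intro allI impI exI[of _ s]) simp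

lemma apx_add:
  assumes "L2_01 f" "L2_01 g" "SPapx f" "SPapx g" shows "SPapx (\<lambda>x. f x + g x)"
  unfolding SPapx_def
proof (intro allI impI)
  fix e :: real assume e: "e > 0"
  obtain s1 where s1: "SP s1" "(LINT x|M01. (f x - s1 x)^2) < e/4" using assms(3) e unfolding SPapx_def by (meson divide_pos_pos zero_less_numeral)
  obtain s2 where s2: "SP s2" "(LINT x|M01. (g x - s2 x)^2) < e/4" using assms(4) e unfolding SPapx_def by (meson divide_pos_pos zero_less_numeral)
  have p: "(a + b - (c + d))^2 \<le> 2 * (a - c)^2 + 2 * (b - d)^2" for a b c d :: real
  proof -
    have "0 \<le> ((a - c) - (b - d))^2" by simp
    then show ?thesis by (simp add: power2_eq_square algebra_simps)
  qed
  have "(LINT x|M01. (f x + g x - (s1 x + s2 x))^2) \<le> (LINT x|M01. 2 * (f x - s1 x)^2 + 2 * (g x - s2 x)^2)"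
    by (intro integral_mono int_sq_diff L2_SP L2_add assms s1 s2 Bochner_Integration.integrable_add integrable_mult_right p)
  also have "\<dots> = 2 * (LINT x|M01. (f x - s1 x)^2) + 2 * (LINT x|M01. (g x - s2 x)^2)"
    by (simp add: int_sq_diff L2_SP assms s1 s2)
  also have "\<dots> < e" using s1(2) s2(2) by simp
  finally show "\<exists>s. SP s \<and> (LINT x|M01. (f x + g x - s x)^2) < e" using SP_add[OF s1(1) s2(1)] by blast
qed

lemma apx_cmult:
  assumes "SPapx f" shows "SPapx (\<lambda>x. c * f x)"
proof (cases "c = 0")
  case True then show ?thesis using apx_SP[OF SP_zero] by simp
next
  case False
  show ?thesis unfolding SPapx_def
  proof (intro allI impI)
    fix e :: real assume e: "e > 0"
    have "e / c^2 > 0" using e False by simp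
    then obtain s where s: "SP s" "(LINT x|M01. (f x - s x)^2) < e / c^2" using assms unfolding SPapx_def by blast
    have "(LINT x|M01. (c * f x - c * s x)^2) = c^2 * (LINT x|M01. (f x - s x)^2)"
      by (simp add: power_mult_distrib right_diff_distrib[symmetric])
    also have "\<dots> < e" using s(2) False by (simp add: field_simps)
    finally show "\<exists>s. SP s \<and> (LINT x|M01. (c * f x - s x)^2) < e" using SP_cmult[OF s(1)] by blast
  qed
qed

lemma apx_cong:
  assumes "SPapx f" "\<And>x. x \<in> {0..1} \<Longrightarrow> f x = g x" shows "SPapx g"
  unfolding SPapx_def
proof (intro allI impI)
  fix e :: real assume "e > 0"
  then obtain s where s: "SP s" "(LINT x|M01. (f x - s x)^2) < e" using assms unfolding SPapx_def by blast
  have "(LINT x|M01. (g x - s x)^2) = (LINT x|M01. (f x - s x)^2)"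
    by (rule Bochner_Integration.integral_cong) (auto simp: assms(2))
  then show "\<exists>s. SP s \<and> (LINT x|M01. (g x - s x)^2) < e" using s by auto
qed

lemma meas01: "measure M01 {0..1} = 1"
  by (simp add: measure_restrict_space)

lemma int_const01: "(LINT x|M01. (c::real)) = c"
  by (simp add: meas01)

lemma apx_unif:
  assumes h: "continuous_on {0..1} h"
    and U: "\<And>e. e > 0 \<Longrightarrow> \<exists>s. SP s \<and> (\<forall>x\<in>{0..1}. \<bar>h x - s x\<bar> \<le> e)"
  shows "SPapx h"
  unfolding SPapx_def
proof (intro allI impI)
  fix e :: real assume e: "e > 0"
  then obtain s where s: "SP s" "\<forall>x\<in>{0..1}. \<bar>h x - s x\<bar> \<le> sqrt (e/2)" using U[of "sqrt (e/2)"] by auto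
  have "(LINT x|M01. (h x - s x)^2) \<le> (LINT x|M01. e/2)"
  proof (intro integral_mono_AE int_sq_diff L2_SP[OF s(1)] L2_cont[OF h])
    show "integrable M01 (\<lambda>x. e/2)" by simp
    show "AE x in M01. (h x - s x)^2 \<le> e/2"
    proof (rule AE_I2)
      fix x assume "x \<in> space M01"
      then have "\<bar>h x - s x\<bar> \<le> sqrt (e/2)" using s by auto
      then have "\<bar>h x - s x\<bar>^2 \<le> (sqrt (e/2))^2" by (intro power_mono) auto
      then show "(h x - s x)^2 \<le> e/2" using e by simp
    qed
  qed
  also have "\<dots> < e" using e by (simp add: meas01)
  finally show "\<exists>s. SP s \<and> (LINT x|M01. (h x - s x)^2) < e" using s by blast
qed

lemma AE_open01: "AE x in M01. 0 < x \<and> x < 1"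
proof (rule AE_I')
  show "{0,1} \<in> null_sets M01"
    by (subst null_sets_restrict_space) (auto intro!: null_sets_completionI countable_imp_null_set_lborel)
  show "{x \<in> space M01. \<not> (0 < x \<and> x < 1)} \<subseteq> {0, 1}" by auto
qed

lemma L2_conv:
  assumes g: "L2_01 g" and hm: "\<And>m. L2_01 (h m)"
    and lim: "AE x in M01. (\<lambda>m. h m x) \<longlonglongrightarrow> g x"
    and w: "integrable M01 w" and bd: "\<And>m. AE x in M01. (g x - h m x)^2 \<le> w x"
    and e: "e > 0"
  shows "\<exists>m. (LINT x|M01. (g x - h m x)^2) < e"
proof -
  have "(\<lambda>m. LINT x|M01. (g x - h m x)^2) \<longlonglongrightarrow> (LINT x|M01. 0)"
  proof (rule integral_dominated_convergence[where w=w])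
    show "(\<lambda>x. 0::real) \<in> borel_measurable M01" by simp
    show "(\<lambda>x. (g x - h m x)^2) \<in> borel_measurable M01" for m
      using int_sq_diff[OF g hm] by auto
    show "integrable M01 w" by (rule w)
    show "AE x in M01. (\<lambda>m. (g x - h m x)^2) \<longlonglongrightarrow> 0"
      using lim
    proof eventually_elim
      case (elim x)
      then have "(\<lambda>m. (g x - h m x)^2) \<longlonglongrightarrow> (g x - g x)^2"
        by (intro tendsto_intros)
      then show ?case by simp
    qed
    show "AE x in M01. norm ((g x - h m x)^2) \<le> w x" for m
      using bd[of m] by eventually_elim simp
  qed
  then have "\<forall>\<^sub>F m in sequentially. (LINT x|M01. (g x - h m x)^2) < e"
    using e by (simp add: order_tendstoD(2))
  then show ?thesis by (auto simp: eventually_sequentially)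
qed

lemma apx_seq:
  assumes g: "L2_01 g" and hm: "\<And>m. L2_01 (h m)" and ap: "\<And>m. SPapx (h m)"
    and lim: "AE x in M01. (\<lambda>m. h m x) \<longlonglongrightarrow> g x"
    and w: "integrable M01 w" and bd: "\<And>m. AE x in M01. (g x - h m x)^2 \<le> w x"
  shows "SPapx g"
proof (rule apx_lim[OF g])
  fix e :: real assume "e > 0"
  from L2_conv[OF g hm lim w bd this] obtain m where "(LINT x|M01. (g x - h m x)^2) < e" by blast
  then show "\<exists>h. L2_01 h \<and> SPapx h \<and> (LINT x|M01. (g x - h x)^2) < e" using hm ap by blast
qed

lemma borel_meas01: "f \<in> borel_measurable borel \<Longrightarrow> f \<in> borel_measurable M01"
  using measurable_comp[OF id_borel_measurable_lebesgue_on[of "{0..1::real}"], of f borel]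
  by (simp add: comp_def)

lemma L2_bdd: assumes "f \<in> borel_measurable M01" "\<And>x. \<bar>f x\<bar> \<le> C" shows "L2_01 f"
  using L2_bmult[OF L2_cont[of "\<lambda>x. 1"] assms(1), of C] assms(2) by simp

lemma cont_bound: assumes "continuous_on {0..1} (h::real\<Rightarrow>real)"
  obtains B where "\<And>x. x \<in> {0..1} \<Longrightarrow> \<bar>h x\<bar> \<le> B"
proof -
  have "bounded (h ` {0..1})" by (intro compact_imp_bounded compact_continuous_image assms) auto
  then obtain B where "\<forall>y\<in>h ` {0..1}. norm y \<le> B" unfolding bounded_iff by blast
  then have "\<And>x. x \<in> {0..1} \<Longrightarrow> \<bar>h x\<bar> \<le> B" by auto
  then show ?thesis by (rule that)
qed

lemma apx_cont:
  assumes h: "continuous_on {0..1} h"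
  shows "SPapx h"
proof -
  obtain B where B: "\<And>x. x \<in> {0..1} \<Longrightarrow> \<bar>h x\<bar> \<le> B" using cont_bound[OF h] by blast
  define d where "d m = inverse (real (Suc m))" for m
  have d0: "d m > 0" for m unfolding d_def by simp
  define G where "G m x = h x / max (phi 1 x) (d m)" for m x
  define hm where "hm m x = phi 1 x * G m x" for m x
  have Gc: "continuous_on {0..1} (G m)" for m
    unfolding G_def
    by (intro continuous_intros h phi_cont) (use d0[of m] in \<open>auto simp: max_def\<close>)
  have hc: "continuous_on {0..1} (hm m)" for m
    unfolding hm_def by (intro continuous_intros Gc phi_cont)
  show ?thesis
  proof (rule apx_seq[where h=hm and w="\<lambda>x. B^2"])
    show "L2_01 h" by (rule L2_cont[OF h])
    show "L2_01 (hm m)" for m by (rule L2_cont[OF hc])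
    show "SPapx (hm m)" for m
    proof (rule apx_unif[OF hc])
      fix e :: real assume "e > 0"
      from unif_SP[OF Gc this] show "\<exists>s. SP s \<and> (\<forall>x\<in>{0..1}. \<bar>hm m x - s x\<bar> \<le> e)"
        unfolding hm_def by blast
    qed
    show "integrable M01 (\<lambda>x. B^2)" by simp
    show "AE x in M01. (\<lambda>m. hm m x) \<longlonglongrightarrow> h x"
      using AE_open01
    proof eventually_elim
      case (elim x)
      have p: "phi 1 x > 0" unfolding phi_def using elim by (intro sin_gt_zero) auto
      have "\<forall>\<^sub>F m in sequentially. d m < phi 1 x"
        unfolding d_def using order_tendstoD(2)[OF LIMSEQ_inverse_real_of_nat p] .
      then have "\<forall>\<^sub>F m in sequentially. hm m x = h x"
        by eventually_elim (use p in \<open>simp add: hm_def G_def max_def\<close>)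
      then show ?case by (rule tendsto_eventually)
    qed
    show "AE x in M01. (h x - hm m x)^2 \<le> B^2" for m
    proof (rule AE_I2)
      fix x assume x: "x \<in> space M01"
      have p: "phi 1 x \<ge> 0" unfolding phi_def using x by (intro sin_ge_zero) auto
      define r where "r = phi 1 x / max (phi 1 x) (d m)"
      have r: "0 \<le> r" "r \<le> 1" unfolding r_def using p d0[of m] by (auto simp: divide_simps max_def)
      have "hm m x = h x * r" unfolding hm_def G_def r_def by simp
      then have "h x - hm m x = h x * (1 - r)" by (simp add: algebra_simps)
      then have "\<bar>h x - hm m x\<bar> = \<bar>h x\<bar> * (1 - r)" using r by (simp add: abs_mult)
      also have "\<dots> \<le> \<bar>h x\<bar>" using r by (simp add: mult_left_le)
      also have "\<dots> \<le> B" using B x by auto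
      finally have "\<bar>h x - hm m x\<bar> \<le> B" .
      then have "\<bar>h x - hm m x\<bar>^2 \<le> B^2" by (intro power_mono) auto
      then show "(h x - hm m x)^2 \<le> B^2" by simp
    qed
  qed
qed

lemma L2_ind_borel: "A \<in> sets borel \<Longrightarrow> L2_01 (indicator A)"
  by (rule L2_bdd[where C=1]) (auto intro!: borel_meas01 simp: indicator_def)

lemma apx_atMost: "SPapx (indicator {..a})"
proof -
  define hm where "hm m x = max 0 (min 1 (1 - real m * (x - a)))" for m x
  show ?thesis
  proof (rule apx_seq[where h=hm and w="\<lambda>x. 1"])
    show "L2_01 (indicator {..a})" by (rule L2_ind_borel) simp
    show "L2_01 (hm m)" for m unfolding hm_def by (intro L2_cont continuous_intros)
    show "SPapx (hm m)" for m unfolding hm_def by (intro apx_cont continuous_intros)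
    show "integrable M01 (\<lambda>x. 1)" by simp
    show "AE x in M01. (\<lambda>m. hm m x) \<longlonglongrightarrow> indicator {..a} x"
    proof (rule AE_I2)
      fix x
      show "(\<lambda>m. hm m x) \<longlonglongrightarrow> indicator {..a} x"
      proof (cases "x \<le> a")
        case True
        have "hm m x = 1" for m
        proof -
          have "0 \<le> real m * (a - x)" using True by simp
          then show ?thesis unfolding hm_def by (simp add: algebra_simps)
        qed
        then show ?thesis using True by simp
      next
        case False
        obtain N :: nat where N: "1 / (x - a) < real N" using reals_Archimedean2 by blast
        have "\<forall>\<^sub>F m in sequentially. hm m x = 0"
          unfolding eventually_sequentially
        proof (intro exI allI impI)
          fix m assume "N \<le> m"
          then have "1 / (x - a) < real m" using N by linarith
          then have "1 < real m * (x - a)" using False by (simp add: field_simps)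
          then show "hm m x = 0" unfolding hm_def by simp
        qed
        then show ?thesis using False by (simp add: tendsto_eventually)
      qed
    qed
    show "AE x in M01. (indicator {..a} x - hm m x)^2 \<le> 1" for m
    proof (rule AE_I2)
      fix x
      have "0 \<le> hm m x" "hm m x \<le> 1" unfolding hm_def by auto
      then have "\<bar>indicator {..a} x - hm m x\<bar> \<le> 1" by (auto simp: indicator_def)
      then have "\<bar>indicator {..a} x - hm m x\<bar>^2 \<le> 1^2" by (intro power_mono) auto
      then show "(indicator {..a} x - hm m x)^2 \<le> (1::real)" by simp
    qed
  qed
qed

lemma apx_sum:
  assumes "finite I" "\<And>i. i \<in> I \<Longrightarrow> L2_01 (f i) \<and> SPapx (f i)"
  shows "L2_01 (\<lambda>x. \<Sum>i\<in>I. f i x) \<and> SPapx (\<lambda>x. \<Sum>i\<in>I. f i x)"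
  using assms
proof (induction I rule: finite_induct)
  case empty then show ?case using L2_cont[of "\<lambda>x. 0"] apx_SP[OF SP_zero] by simp
next
  case (insert i F)
  then show ?case by (simp add: L2_add apx_add)
qed

lemma apx_borel:
  assumes A: "A \<in> sets borel" shows "SPapx (indicator A)"
proof -
  have st: "Int_stable (range (\<lambda>a::real. {..a}))"
  proof (rule Int_stableI)
    fix X Y assume "X \<in> range (\<lambda>a::real. {..a})" "Y \<in> range (\<lambda>a::real. {..a})"
    then obtain a b where "X = {..a}" "Y = {..b}" by blast
    then have "X \<inter> Y = {..min a b}" by auto
    then show "X \<inter> Y \<in> range (\<lambda>a::real. {..a})" by blast
  qed
  have cl: "range (\<lambda>a::real. {..a}) \<subseteq> Pow UNIV" by auto
  have As: "A \<in> sigma_sets UNIV (range (\<lambda>a::real. {..a}))"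
    using A by (simp add: borel_eq_atMost sets_measure_of)
  show ?thesis
  proof (rule sigma_sets_induct_disjoint[OF st cl As])
    fix A :: "real set" assume "A \<in> range (\<lambda>a::real. {..a})" then show "SPapx (indicator A)" using apx_atMost by auto
  next
    have "indicator {} = (\<lambda>x::real. 0::real)" by (auto simp: fun_eq_iff)
    then show "SPapx (indicator {})" using apx_SP[OF SP_zero] by simp
  next
    fix A :: "real set" assume compl: "A \<in> sigma_sets UNIV (range (\<lambda>a::real. {..a}))" "SPapx (indicator A)"
    have B: "A \<in> sets borel" using compl(1) by (simp add: borel_eq_atMost sets_measure_of)
    have one: "SPapx (indicator {..1::real})" by (rule apx_atMost)
    have "SPapx (\<lambda>x. indicator {..1::real} x + (-1) * indicator A x)"
      by (intro apx_add apx_cmult L2_cmult L2_ind_borel B one compl(2)) simp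
    then show "SPapx (indicator (UNIV - A))" by (rule apx_cong) (auto simp: indicator_def)
  next
    fix A :: "nat \<Rightarrow> real set"
    assume union: "disjoint_family A" "range A \<subseteq> sigma_sets UNIV (range (\<lambda>a::real. {..a}))"
      "\<And>i. SPapx (indicator (A i))"
    have B: "A i \<in> sets borel" for i using union(2) by (auto simp: borel_eq_atMost sets_measure_of)
    show "SPapx (indicator (\<Union>i. A i))"
    proof (rule apx_seq[where h="\<lambda>m x. \<Sum>i<m. indicator (A i) x" and w="\<lambda>x. 1"])
      show "L2_01 (indicator (\<Union>i. A i))" using B by (intro L2_ind_borel) auto
      show "L2_01 (\<lambda>x. \<Sum>i<m. indicator (A i) x)" for m
        using apx_sum[of "{..<m}" "\<lambda>i. indicator (A i)"] B union(3) L2_ind_borel by auto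
      show "SPapx (\<lambda>x. \<Sum>i<m. indicator (A i) x)" for m
        using apx_sum[of "{..<m}" "\<lambda>i. indicator (A i)"] B union(3) L2_ind_borel by auto
      show "integrable M01 (\<lambda>x. 1)" by simp
      have sumeq: "(\<Sum>i<m. indicator (A i) x) = (indicator (\<Union>i<m. A i) x :: real)" for m x
        by (rule indicator_UN_disjoint[symmetric]) (use union(1) in \<open>auto simp: disjoint_family_on_def\<close>)
      show "AE x in M01. (\<lambda>m. \<Sum>i<m. indicator (A i) x) \<longlonglongrightarrow> (indicator (\<Union>i. A i) x :: real)"
      proof (rule AE_I2)
        fix x
        show "(\<lambda>m. \<Sum>i<m. indicator (A i) x) \<longlonglongrightarrow> (indicator (\<Union>i. A i) x :: real)"
        proof (cases "x \<in> (\<Union>i. A i)")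
          case True
          then obtain j where j: "x \<in> A j" by blast
          have "\<forall>\<^sub>F m in sequentially. (\<Sum>i<m. indicator (A i) x) = (indicator (\<Union>i. A i) x :: real)"
            unfolding eventually_sequentially sumeq
          proof (rule exI[of _ "Suc j"], intro allI impI)
            fix n assume "Suc j \<le> n"
            then have "x \<in> (\<Union>i<n. A i)" using j by auto
            then show "(indicator (\<Union>i<n. A i) x :: real) = indicator (\<Union>i. A i) x" using True by simp
          qed
          then show ?thesis by (rule tendsto_eventually)
        next
          case False
          then show ?thesis unfolding sumeq by (auto simp: indicator_def)
        qed
      qed
      show "AE x in M01. (indicator (\<Union>i. A i) x - (\<Sum>i<m. indicator (A i) x))^2 \<le> (1::real)" for m
        unfolding sumeq by (rule AE_I2) (auto simp: indicator_def)
    qed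
  qed
qed

lemma apx_lebesgue:
  assumes A: "A \<in> sets M01" shows "SPapx (indicator A)"
proof (rule apx_lim)
  have AL: "A \<in> sets lebesgue" "A \<subseteq> {0..1}" using A by (auto simp: sets_restrict_space_iff)
  show "L2_01 (indicator A)" by (rule L2_bdd[where C=1]) (use A in \<open>auto simp: indicator_def\<close>)
  fix e :: real assume e: "e > 0"
  obtain T where T: "open T" "A \<subseteq> T" "(T - A) \<in> lmeasurable" "emeasure lebesgue (T - A) < ennreal e"
    using sets_lebesgue_outer_open[OF AL(1) e] by blast
  have TB: "T \<in> sets borel" using T(1) by auto
  have "(LINT x|M01. (indicator A x - indicator T x :: real)^2) = (LINT x|M01. (indicator (T - A) x :: real))"
    by (rule Bochner_Integration.integral_cong) (use T(2) in \<open>auto simp: indicator_def\<close>)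
  also have "\<dots> = measure M01 ((T - A) \<inter> {0..1})" by simp
  also have "\<dots> = measure lebesgue ((T - A) \<inter> {0..1})"
    by (rule measure_restrict_space) auto
  also have "\<dots> \<le> measure lebesgue (T - A)"
    by (rule measure_mono_fmeasurable) (use T(3) in auto)
  also have "\<dots> < e"
    using T(4) emeasure_eq_measure2[OF T(3)] by (simp add: ennreal_less_iff)
  finally show "\<exists>h. L2_01 h \<and> SPapx h \<and> (LINT x|M01. (indicator A x - h x)^2) < e"
    using L2_ind_borel[OF TB] apx_borel[OF TB] by blast
qed

lemma apx_nonneg:
  assumes u: "u \<in> borel_measurable M01" "\<And>x. 0 \<le> u x" and sq: "integrable M01 (\<lambda>x. (u x)^2)"
  shows "SPapx u"
proof -
  have "integrable M01 (\<lambda>x. (u x)^2) \<longrightarrow> SPapx u"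
    using u
  proof (induction rule: borel_measurable_induct_real)
    case (set A)
    then show ?case using apx_lebesgue by auto
  next
    case (mult u c)
    show ?case
    proof
      assume i: "integrable M01 (\<lambda>x. (c * u x)^2)"
      show "SPapx (\<lambda>x. c * u x)"
      proof (cases "c = 0")
        case True then show ?thesis using apx_SP[OF SP_zero] by simp
      next
        case False
        have "integrable M01 (\<lambda>x. (1 / c^2) * (c * u x)^2)" using i by simp
        then have "integrable M01 (\<lambda>x. (u x)^2)" using False by (simp add: power_mult_distrib)
        then show ?thesis using mult by (intro apx_cmult) simp
      qed
    qed
  next
    case (add u v)
    show ?case
    proof
      assume i: "integrable M01 (\<lambda>x. (v x + u x)^2)"
      have iu: "integrable M01 (\<lambda>x. (u x)^2)"
      proof (rule Bochner_Integration.integrable_bound[OF i])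
        show "(\<lambda>x. (u x)^2) \<in> borel_measurable M01" using add by measurable
        show "AE x in M01. norm ((u x)^2) \<le> norm ((v x + u x)^2)"
          using add by (intro AE_I2) (simp add: power_mono)
      qed
      have iv: "integrable M01 (\<lambda>x. (v x)^2)"
      proof (rule Bochner_Integration.integrable_bound[OF i])
        show "(\<lambda>x. (v x)^2) \<in> borel_measurable M01" using add by measurable
        show "AE x in M01. norm ((v x)^2) \<le> norm ((v x + u x)^2)"
          using add by (intro AE_I2) (simp add: power_mono)
      qed
      have "L2_01 u" "L2_01 v" using iu iv add unfolding L2_01_def by auto
      then show "SPapx (\<lambda>x. v x + u x)" using add iu iv by (intro apx_add) auto
    qed
  next
    case (seq U)
    note mU = \<open>\<And>i. U i \<in> borel_measurable M01\<close>
    note nU = \<open>\<And>i x. 0 \<le> U i x\<close>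
    note PU = \<open>\<And>i. integrable M01 (\<lambda>x. (U i x)^2) \<longrightarrow> SPapx (U i)\<close>
    note limU = \<open>\<And>x. x \<in> space M01 \<Longrightarrow> (\<lambda>i. U i x) \<longlonglongrightarrow> u x\<close>
    show ?case
    proof
      assume i: "integrable M01 (\<lambda>x. (u x)^2)"
      have le: "U m x \<le> u x" if "x \<in> space M01" for m x
      proof (rule incseq_le)
        show "incseq (\<lambda>i. U i x)" using \<open>incseq U\<close> by (auto simp: incseq_def le_fun_def)
        show "(\<lambda>i. U i x) \<longlonglongrightarrow> u x" using limU that by auto
      qed
      have iU: "integrable M01 (\<lambda>x. (U m x)^2)" for m
      proof (rule Bochner_Integration.integrable_bound[OF i])
        show "(\<lambda>x. (U m x)^2) \<in> borel_measurable M01" using mU[of m] by measurable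
        show "AE x in M01. norm ((U m x)^2) \<le> norm ((u x)^2)"
          using le nU by (intro AE_I2) (simp add: power_mono)
      qed
      have L2U: "L2_01 (U m)" for m using iU mU unfolding L2_01_def by auto
      show "SPapx u"
      proof (rule apx_seq[where h=U and w="\<lambda>x. (u x)^2"])
        show "L2_01 u" using i u unfolding L2_01_def by auto
        show "L2_01 (U m)" for m by (rule L2U)
        show "SPapx (U m)" for m using PU[of m] iU by auto
        show "integrable M01 (\<lambda>x. (u x)^2)" by (rule i)
        show "AE x in M01. (\<lambda>m. U m x) \<longlonglongrightarrow> u x" using limU by (intro AE_I2) auto
        show "AE x in M01. (u x - U m x)^2 \<le> (u x)^2" for m
        proof (rule AE_I2)
          fix x assume x: "x \<in> space M01"
          have "0 \<le> u x - U m x" "u x - U m x \<le> u x" using le[OF x] nU[of m x] by auto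
          then show "(u x - U m x)^2 \<le> (u x)^2" by (intro power_mono) auto
        qed
      qed
    qed
  qed
  then show ?thesis using sq by blast
qed

lemma apx_L2:
  assumes g: "L2_01 g" shows "SPapx g"
proof -
  define gp where "gp x = max (g x) 0" for x
  define gm where "gm x = max (- g x) 0" for x
  have mg: "g \<in> borel_measurable M01" using g by (rule L2_meas)
  have mp: "gp \<in> borel_measurable M01" "gm \<in> borel_measurable M01" unfolding gp_def gm_def using mg by measurable
  have ip: "integrable M01 (\<lambda>x. (gp x)^2)"
  proof (rule Bochner_Integration.integrable_bound[OF L2_sq[OF g]])
    show "(\<lambda>x. (gp x)^2) \<in> borel_measurable M01" using mp by measurable
    show "AE x in M01. norm ((gp x)^2) \<le> norm ((g x)^2)"
      by (intro AE_I2) (auto simp: gp_def max_def)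
  qed
  have im: "integrable M01 (\<lambda>x. (gm x)^2)"
  proof (rule Bochner_Integration.integrable_bound[OF L2_sq[OF g]])
    show "(\<lambda>x. (gm x)^2) \<in> borel_measurable M01" using mp by measurable
    show "AE x in M01. norm ((gm x)^2) \<le> norm ((g x)^2)"
      by (intro AE_I2) (auto simp: gm_def max_def)
  qed
  have "SPapx gp" by (rule apx_nonneg[OF mp(1) _ ip]) (simp add: gp_def)
  moreover have "SPapx gm" by (rule apx_nonneg[OF mp(2) _ im]) (simp add: gm_def)
  moreover have "L2_01 gp" "L2_01 gm" using mp ip im unfolding L2_01_def by auto
  ultimately have "SPapx (\<lambda>x. gp x + (-1) * gm x)"
    by (intro apx_add apx_cmult L2_cmult) auto
  then show ?thesis by (rule apx_cong) (auto simp: gp_def gm_def max_def)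
qed

lemma parseval_approx:
  assumes g: "L2_01 g" and e: "e > 0"
  shows "\<exists>N. (LINT x|M01. (g x)^2) \<le> (\<Sum>n<N. 2 * (LINT x|M01. g x * phi n x)^2) + e"
proof -
  obtain s where s: "SP s" "(LINT x|M01. (g x - s x)^2) < e" using apx_L2[OF g] e unfolding SPapx_def by blast
  obtain N c where sc: "\<forall>x. s x = (\<Sum>n<N. c n * phi n x)" using s(1) unfolding SP_def by blast
  have "(LINT x|M01. (g x)^2) \<le> (LINT x|M01. (g x - (\<Sum>n<N. c n * phi n x))^2)
           + (\<Sum>n<N. 2 * (LINT x|M01. g x * phi n x)^2)" by (rule best_approx[OF g])
  also have "(LINT x|M01. (g x - (\<Sum>n<N. c n * phi n x))^2) = (LINT x|M01. (g x - s x)^2)"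
    using sc by simp
  finally show ?thesis using s(2) by (intro exI[of _ N]) simp
qed

lemma int_sq_expand:
  assumes f: "L2_01 f" and g: "L2_01 g"
  shows "(LINT x|M01. (f x - l * g x)^2) = (LINT x|M01. (f x)^2) - 2 * l * (LINT x|M01. f x * g x) + l^2 * (LINT x|M01. (g x)^2)"
proof -
  have e: "(f x - l * g x)^2 = (f x)^2 - (2 * l) * (f x * g x) + l^2 * (g x)^2" for x
    by (simp add: power2_eq_square algebra_simps)
  show ?thesis unfolding e using L2_sq[OF f] L2_sq[OF g] int_prod[OF f g] by simp
qed

lemma cauchy_schwarz01:
  assumes f: "L2_01 f" and g: "L2_01 g"
  shows "(LINT x|M01. f x * g x)^2 \<le> (LINT x|M01. (f x)^2) * (LINT x|M01. (g x)^2)"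
proof -
  define A where "A = (LINT x|M01. (f x)^2)"
  define B where "B = (LINT x|M01. f x * g x)"
  define C where "C = (LINT x|M01. (g x)^2)"
  have q: "0 \<le> A - 2 * l * B + l^2 * C" for l
  proof -
    have "0 \<le> (LINT x|M01. (f x - l * g x)^2)" by (simp add: integral_nonneg_AE)
    then show ?thesis unfolding int_sq_expand[OF f g] A_def B_def C_def .
  qed
  have C0: "0 \<le> C" unfolding C_def by (simp add: integral_nonneg_AE)
  show ?thesis unfolding A_def[symmetric] B_def[symmetric] C_def[symmetric]
  proof (cases "C = 0")
    case True
    have "B = 0"
    proof (rule ccontr)
      assume "B \<noteq> 0"
      have "0 \<le> A - 2 * ((A + 1) / (2 * B)) * B" using q[of "(A + 1) / (2 * B)"] True by simp
      then show False using \<open>B \<noteq> 0\<close> by (simp add: field_simps)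
    qed
    then show "B^2 \<le> A * C" using True by simp
  next
    case False
    then have Cp: "C > 0" using C0 by simp
    have "0 \<le> A - 2 * (B / C) * B + (B / C)^2 * C" by (rule q)
    also have "\<dots> = A - B^2 / C" using Cp by (simp add: power2_eq_square field_simps)
    finally have "B^2 / C \<le> A" by simp
    then show "B^2 \<le> A * C" using Cp by (simp add: field_simps)
  qed
qed

lemma L2norm_nonneg: "0 \<le> L2norm_01 f"
  unfolding L2norm_01_def by (simp add: integral_nonneg_AE)

lemma norm_tri:
  assumes f: "L2_01 f" and g: "L2_01 g"
  shows "L2norm_01 (\<lambda>x. f x + g x) \<le> L2norm_01 f + L2norm_01 g"
proof -
  define A where "A = (LINT x|M01. (f x)^2)"
  define B where "B = (LINT x|M01. f x * g x)"
  define C where "C = (LINT x|M01. (g x)^2)"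
  have A0: "0 \<le> A" "0 \<le> C" unfolding A_def C_def by (simp_all add: integral_nonneg_AE)
  have "(LINT x|M01. (f x + g x)^2) = (LINT x|M01. (f x - (-1) * g x)^2)" by simp
  also have "\<dots> = A + 2 * B + C" unfolding int_sq_expand[OF f g] A_def B_def C_def by simp
  finally have e: "(LINT x|M01. (f x + g x)^2) = A + 2 * B + C" .
  have "B \<le> sqrt A * sqrt C"
  proof -
    have "B^2 \<le> A * C" using cauchy_schwarz01[OF f g] unfolding A_def B_def C_def .
    then have "sqrt (B^2) \<le> sqrt (A * C)" by (rule real_sqrt_le_mono)
    then show ?thesis by (simp add: real_sqrt_mult)
  qed
  then have "A + 2 * B + C \<le> (sqrt A + sqrt C)^2" using A0 by (simp add: power2_sum)
  then have "sqrt (A + 2 * B + C) \<le> sqrt ((sqrt A + sqrt C)^2)" by (rule real_sqrt_le_mono)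
  also have "\<dots> = sqrt A + sqrt C" using A0 by simp
  finally show ?thesis unfolding L2norm_01_def e A_def C_def .
qed

lemma norm_neg: "L2norm_01 (\<lambda>x. - f x) = L2norm_01 f"
  unfolding L2norm_01_def by simp

lemma norm_diff_le:
  assumes f: "L2_01 f" and g: "L2_01 g"
  shows "L2norm_01 (\<lambda>x. f x - g x) \<le> L2norm_01 f + L2norm_01 g"
  using norm_tri[OF f L2_cmult[OF g, of "-1"]] norm_neg[of g] by simp

lemma norm_rev_tri:
  assumes f: "L2_01 f" and g: "L2_01 g"
  shows "\<bar>L2norm_01 f - L2norm_01 g\<bar> \<le> L2norm_01 (\<lambda>x. f x - g x)"
proof -
  have "L2norm_01 f \<le> L2norm_01 (\<lambda>x. f x - g x) + L2norm_01 g"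
    using norm_tri[OF L2_diff[OF f g] g] by simp
  moreover have "L2norm_01 g \<le> L2norm_01 (\<lambda>x. g x - f x) + L2norm_01 f"
    using norm_tri[OF L2_diff[OF g f] f] by simp
  moreover have "L2norm_01 (\<lambda>x. g x - f x) = L2norm_01 (\<lambda>x. f x - g x)"
    using norm_neg[of "\<lambda>x. f x - g x"] by simp
  ultimately show ?thesis by linarith
qed

lemma cont_norm_diff:
  assumes L: "\<And>t. t \<in> S \<Longrightarrow> L2_01 (u t)" "\<And>t. t \<in> S \<Longrightarrow> L2_01 (v t)"
    and cu: "\<And>t. t \<in> S \<Longrightarrow> ((\<lambda>s. L2norm_01 (\<lambda>x. u s x - u t x)) \<longlongrightarrow> 0) (at t within S)"
    and cv: "\<And>t. t \<in> S \<Longrightarrow> ((\<lambda>s. L2norm_01 (\<lambda>x. v s x - v t x)) \<longlongrightarrow> 0) (at t within S)"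
  shows "continuous_on S (\<lambda>t. L2norm_01 (\<lambda>x. u t x - v t x))"
  unfolding continuous_on_def
proof (intro ballI)
  fix t assume t: "t \<in> S"
  have ev: "\<forall>\<^sub>F s in at t within S. s \<in> S" by (simp add: eventually_at_filter)
  have "((\<lambda>s. L2norm_01 (\<lambda>x. u s x - v s x) - L2norm_01 (\<lambda>x. u t x - v t x)) \<longlongrightarrow> 0) (at t within S)"
  proof (rule Lim_null_comparison)
    show "((\<lambda>s. L2norm_01 (\<lambda>x. u s x - u t x) + L2norm_01 (\<lambda>x. v s x - v t x)) \<longlongrightarrow> 0) (at t within S)"
      using tendsto_add[OF cu[OF t] cv[OF t]] by simp
    show "\<forall>\<^sub>F s in at t within S. norm (L2norm_01 (\<lambda>x. u s x - v s x) - L2norm_01 (\<lambda>x. u t x - v t x))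
            \<le> L2norm_01 (\<lambda>x. u s x - u t x) + L2norm_01 (\<lambda>x. v s x - v t x)"
      using ev
    proof eventually_elim
      case (elim s)
      have "norm (L2norm_01 (\<lambda>x. u s x - v s x) - L2norm_01 (\<lambda>x. u t x - v t x))
          \<le> L2norm_01 (\<lambda>x. (u s x - v s x) - (u t x - v t x))"
        using norm_rev_tri[OF L2_diff[OF L(1,2)[OF elim]] L2_diff[OF L(1,2)[OF t]]] by simp
      also have "(\<lambda>x. (u s x - v s x) - (u t x - v t x)) = (\<lambda>x. (u s x - u t x) - (v s x - v t x))"
        by (simp add: algebra_simps)
      also have "L2norm_01 \<dots> \<le> L2norm_01 (\<lambda>x. u s x - u t x) + L2norm_01 (\<lambda>x. v s x - v t x)"
        by (intro norm_diff_le L2_diff L elim t)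
      finally show ?case .
    qed
  qed
  then show "((\<lambda>s. L2norm_01 (\<lambda>x. u s x - v s x)) \<longlongrightarrow> L2norm_01 (\<lambda>x. u t x - v t x)) (at t within S)"
    by (simp add: LIM_zero_iff)
qed

lemma wave_L2: "wave_sol T q u0 u1 u \<Longrightarrow> t \<in> {0..T} \<Longrightarrow> L2_01 (u t)"
  unfolding wave_sol_def by blast

lemma wave_cont: "wave_sol T q u0 u1 u \<Longrightarrow> t \<in> {0..T} \<Longrightarrow>
   ((\<lambda>s. L2norm_01 (\<lambda>x. u s x - u t x)) \<longlongrightarrow> 0) (at t within {0..T})"
  unfolding wave_sol_def by blast

lemma cont_y:
  assumes "wave_sol T q u0 u1 u" "wave_sol T q' u0' u1' u'"
  shows "continuous_on {0..T} (\<lambda>t. LINT x|M01. (u t x - u' t x)^2)"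
proof -
  have "continuous_on {0..T} (\<lambda>t. (L2norm_01 (\<lambda>x. u t x - u' t x))^2)"
    by (intro continuous_intros cont_norm_diff wave_L2[OF assms(1)] wave_L2[OF assms(2)]
        wave_cont[OF assms(1)] wave_cont[OF assms(2)]) auto
  then show ?thesis unfolding norm_sq .
qed

lemma cont_U:
  assumes "wave_sol T q u0 u1 u"
  shows "continuous_on {0..T} (\<lambda>t. LINT x|M01. (u t x)^2)"
proof -
  have "continuous_on {0..T} (\<lambda>t. (L2norm_01 (\<lambda>x. u t x - (\<lambda>t x. 0) t x))^2)"
    by (intro continuous_intros cont_norm_diff wave_L2[OF assms(1)]  wave_cont[OF assms(1)])
       (auto simp: L2_cont L2norm_01_def)
  then show ?thesis unfolding norm_sq by simp
qed

lemma Linf_meas: "Linf_01 q \<Longrightarrow> q \<in> borel_measurable M01"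
  unfolding Linf_01_def by blast

lemma Linf_L2mult: "Linf_01 q \<Longrightarrow> L2_01 f \<Longrightarrow> L2_01 (\<lambda>x. q x * f x)"
  unfolding Linf_01_def using L2_bmult by blast

lemma mode:
  assumes W: "wave_sol T q u0 u1 u" and q: "Linf_01 q" and n: "n \<ge> 1"
  shows "\<exists>A1 A2.
    (\<forall>t\<in>{0..T}. ((\<lambda>s. inner_01 (u s) (phi n)) has_real_derivative A1 t) (at t within {0..T})) \<and>
    (\<forall>t\<in>{0..T}. (A1 has_real_derivative A2 t) (at t within {0..T})) \<and>
    (\<forall>t\<in>{0..T}. A2 t = - ((real n * pi)^2) * inner_01 (u t) (phi n) - inner_01 (\<lambda>x. q x * u t x) (phi n)) \<and>
    inner_01 (u 0) (phi n) = inner_01 u0 (phi n) \<and> A1 0 = inner_01 u1 (phi n)"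
proof -
  let ?k = "real n * pi"
  define v1 where "v1 x = ?k * cos (?k * x)" for x
  define vv where "vv x = - (?k^2) * phi n x" for x
  have d1: "\<forall>x. (phi n has_real_derivative v1 x) (at x)"
    unfolding phi_def v1_def
    by (auto intro!: derivative_eq_intros simp: algebra_simps)
  have d2: "\<forall>x. (v1 has_real_derivative vv x) (at x)"
    unfolding phi_def v1_def vv_def
    by (auto intro!: derivative_eq_intros simp: algebra_simps power2_eq_square)
  have c: "continuous_on UNIV vv" unfolding vv_def by (intro continuous_intros phi_cont)
  have b: "phi n 0 = 0" "phi n 1 = 0" unfolding phi_def by simp_all
  from W[unfolded wave_sol_def] d1 d2 c b obtain A1 A2 where
    A: "\<forall>t\<in>{0..T}. ((\<lambda>s. inner_01 (u s) (phi n)) has_real_derivative A1 t) (at t within {0..T})"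
       "\<forall>t\<in>{0..T}. (A1 has_real_derivative A2 t) (at t within {0..T})"
       "\<forall>t\<in>{0..T}. A2 t = inner_01 (u t) (\<lambda>x. vv x - q x * phi n x)"
       "inner_01 (u 0) (phi n) = inner_01 u0 (phi n)" "A1 0 = inner_01 u1 (phi n)"
    by blast
  have "A2 t = - (?k^2) * inner_01 (u t) (phi n) - inner_01 (\<lambda>x. q x * u t x) (phi n)" if t: "t \<in> {0..T}" for t
  proof -
    have ut: "L2_01 (u t)" by (rule wave_L2[OF W t])
    have i1: "integrable M01 (\<lambda>x. u t x * phi n x)" by (rule int_prod[OF ut L2_phi])
    have i2: "integrable M01 (\<lambda>x. q x * u t x * phi n x)" by (rule int_prod[OF Linf_L2mult[OF q ut] L2_phi])
    have "inner_01 (u t) (\<lambda>x. vv x - q x * phi n x)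
        = (LINT x|M01. (- (?k^2)) * (u t x * phi n x) - q x * u t x * phi n x)"
      unfolding inner_01_def vv_def by (rule Bochner_Integration.integral_cong) (auto simp: algebra_simps)
    also have "\<dots> = - (?k^2) * inner_01 (u t) (phi n) - inner_01 (\<lambda>x. q x * u t x) (phi n)"
      unfolding inner_01_def using i1 i2 by simp
    finally show ?thesis using A(3) t by simp
  qed
  then show ?thesis using A by blast
qed

definition modeP where
  "modeP T q u u0 u1 n A1 A2 \<longleftrightarrow>
    (\<forall>t\<in>{0..T}. ((\<lambda>s. inner_01 (u s) (phi n)) has_real_derivative A1 t) (at t within {0..T})) \<and>
    (\<forall>t\<in>{0..T}. (A1 has_real_derivative A2 t) (at t within {0..T})) \<and>
    (\<forall>t\<in>{0..T}. A2 t = - ((real n * pi)^2) * inner_01 (u t) (phi n) - inner_01 (\<lambda>x. q x * u t x) (phi n)) \<and>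
    inner_01 (u 0) (phi n) = inner_01 u0 (phi n) \<and> A1 0 = inner_01 u1 (phi n)"

lemma mode_fun:
  assumes W: "wave_sol T q u0 u1 u" and q: "Linf_01 q"
  obtains A1 A2 where "\<And>n. n \<ge> 1 \<Longrightarrow> modeP T q u u0 u1 n (A1 n) (A2 n)"
proof -
  have "\<forall>n. \<exists>F. n \<ge> 1 \<longrightarrow> modeP T q u u0 u1 n (fst F) (snd F)"
  proof
    fix n
    show "\<exists>F. n \<ge> 1 \<longrightarrow> modeP T q u u0 u1 n (fst F) (snd F)"
    proof (cases "n \<ge> 1")
      case True
      then obtain A1 A2 where "modeP T q u u0 u1 n A1 A2" using mode[OF W q True] unfolding modeP_def by blast
      then show ?thesis by (intro exI[of _ "(A1, A2)"]) simp
    qed simp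
  qed
  then obtain F where "\<forall>n. n \<ge> 1 \<longrightarrow> modeP T q u u0 u1 n (fst (F n)) (snd (F n))" using choice by metis
  then show ?thesis using that[of "\<lambda>n. fst (F n)" "\<lambda>n. snd (F n)"] by blast
qed

lemma inner_diff:
  assumes "L2_01 f" "L2_01 g" "L2_01 v"
  shows "inner_01 f v - inner_01 g v = inner_01 (\<lambda>x. f x - g x) v"
  unfolding inner_01_def using int_prod[OF assms(1,3)] int_prod[OF assms(2,3)]
  by (simp add: left_diff_distrib)

lemma sum_drop0: "F 0 = 0 \<Longrightarrow> (\<Sum>n<(N::nat). F n) = (\<Sum>n\<in>{1..<N}. F n)"
  by (rule sum.mono_neutral_right) (auto simp: not_less_eq_eq)

lemma kge1: "n \<ge> 1 \<Longrightarrow> 1 \<le> (real n * pi)^2"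
proof -
  assume "n \<ge> 1"
  then have "1 \<le> real n * pi" using pi_gt3 by (simp add: mult_ge1_I less_imp_le order_trans[OF _ real_of_nat_ge_one_iff[THEN iffD2]])
  then show ?thesis by (simp add: one_le_power)
qed

lemma energy:
  fixes u u' :: "real \<Rightarrow> real \<Rightarrow> real" and h :: "real \<Rightarrow> real"
  assumes W1: "wave_sol T q u0 u1 u" and W2: "wave_sol T q' u0' u1' u'"
    and q: "Linf_01 q" and q': "Linf_01 q'"
    and L: "L2_01 u0" "L2_01 u1" "L2_01 u0'" "L2_01 u1'"
    and hc: "continuous_on {0..T} h" and h0: "\<And>t. t \<in> {0..T} \<Longrightarrow> 0 \<le> h t"
    and hb: "\<And>t. t \<in> {0..T} \<Longrightarrow> (LINT x|M01. (q x * u t x - q' x * u' t x)^2) \<le> h t"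
    and t: "t \<in> {0..T}"
  shows "(LINT x|M01. (u t x - u' t x)^2) \<le> 2 * exp t *
     (((LINT x|M01. (u0 x - u0' x)^2) + (LINT x|M01. (u1 x - u1' x)^2)) / 2 + integral {0..t} h)"
proof -
  obtain A1 A2 where A: "\<And>n. n \<ge> 1 \<Longrightarrow> modeP T q u u0 u1 n (A1 n) (A2 n)" using mode_fun[OF W1 q] by blast
  obtain B1 B2 where B: "\<And>n. n \<ge> 1 \<Longrightarrow> modeP T q' u' u0' u1' n (B1 n) (B2 n)" using mode_fun[OF W2 q'] by blast
  define D where "D = ((LINT x|M01. (u0 x - u0' x)^2) + (LINT x|M01. (u1 x - u1' x)^2)) / 2"
  define H where "H s = integral {0..s} h" for s
  define k where "k n = real n * pi" for n :: nat
  define a where "a n s = inner_01 (u s) (phi n) - inner_01 (u' s) (phi n)" for n s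
  define b where "b n s = A1 n s - B1 n s" for n s
  define c where "c n s = A2 n s - B2 n s" for n s
  define r where "r s x = q x * u s x - q' x * u' s x" for s x
  define f where "f n s = inner_01 (r s) (phi n)" for n s
  have uL: "L2_01 (u s)" "L2_01 (u' s)" if "s \<in> {0..T}" for s
    using wave_L2[OF W1 that] wave_L2[OF W2 that] by auto
  have rL: "L2_01 (r s)" if "s \<in> {0..T}" for s
    unfolding r_def by (intro L2_diff Linf_L2mult q q' uL that)
  have k1: "1 \<le> (k n)^2" if "n \<ge> 1" for n unfolding k_def using kge1[OF that] .
  have da: "(a n has_real_derivative b n s) (at s within {0..T})" if "n \<ge> 1" "s \<in> {0..T}" for n s
    using DERIV_diff[of "\<lambda>s. inner_01 (u s) (phi n)" "A1 n s" s "{0..T}" "\<lambda>s. inner_01 (u' s) (phi n)" "B1 n s"]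
      A[OF that(1)] B[OF that(1)] that(2) unfolding modeP_def a_def[abs_def] b_def by blast
  have db: "(b n has_real_derivative c n s) (at s within {0..T})" if "n \<ge> 1" "s \<in> {0..T}" for n s
    using DERIV_diff[of "A1 n" "A2 n s" s "{0..T}" "B1 n" "B2 n s"]
      A[OF that(1)] B[OF that(1)] that(2) unfolding modeP_def b_def[abs_def] c_def by blast
  have cf: "c n s = - ((k n)^2) * a n s - f n s" if "n \<ge> 1" "s \<in> {0..T}" for n s
  proof -
    have A2: "A2 n s = - ((real n * pi)^2) * inner_01 (u s) (phi n) - inner_01 (\<lambda>x. q x * u s x) (phi n)"
      using A[OF that(1)] that(2) unfolding modeP_def by blast
    have B2: "B2 n s = - ((real n * pi)^2) * inner_01 (u' s) (phi n) - inner_01 (\<lambda>x. q' x * u' s x) (phi n)"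
      using B[OF that(1)] that(2) unfolding modeP_def by blast
    have "c n s = - ((k n)^2) * a n s - (inner_01 (\<lambda>x. q x * u s x) (phi n) - inner_01 (\<lambda>x. q' x * u' s x) (phi n))"
      unfolding c_def a_def k_def A2 B2 by (simp add: algebra_simps)
    also have "inner_01 (\<lambda>x. q x * u s x) (phi n) - inner_01 (\<lambda>x. q' x * u' s x) (phi n) = f n s"
      unfolding f_def r_def by (intro inner_diff Linf_L2mult q q' uL that L2_phi)
    finally show ?thesis .
  qed
  have a0: "a n 0 = inner_01 (\<lambda>x. u0 x - u0' x) (phi n)" if "n \<ge> 1" for n
    using A[OF that] B[OF that] unfolding modeP_def a_def by (simp add: inner_diff L L2_phi)
  have b0: "b n 0 = inner_01 (\<lambda>x. u1 x - u1' x) (phi n)" if "n \<ge> 1" for n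
    using A[OF that] B[OF that] unfolding modeP_def b_def by (simp add: inner_diff L L2_phi)
  have claim: "(\<Sum>n\<in>{1..<N}. (a n t)^2) \<le> exp t * (D + H t)" for N
  proof -
    define S where "S = {1..<N}"
    have S1: "n \<in> S \<Longrightarrow> n \<ge> 1" for n unfolding S_def by auto
    define E where "E s = (\<Sum>n\<in>S. (a n s)^2 + (b n s)^2 / (k n)^2)" for s
    define E' where "E' s = (\<Sum>n\<in>S. 2 * a n s * b n s + 2 * b n s * c n s / (k n)^2)" for s
    have dE: "(E has_real_derivative E' s) (at s within {0..T})" if s: "s \<in> {0..T}" for s
      unfolding E_def[abs_def] E'_def
    proof (rule DERIV_sum)
      fix n assume n: "n \<in> S"
      have "((\<lambda>s. (a n s)^2 + (b n s)^2 / (k n)^2) has_real_derivative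
              (of_nat 2 * (b n s * (a n s)^(2 - Suc 0)) + of_nat 2 * (c n s * (b n s)^(2 - Suc 0)) / (k n)^2)) (at s within {0..T})"
        by (intro DERIV_add DERIV_cdivide DERIV_power da db S1 n s)
      then show "((\<lambda>s. (a n s)^2 + (b n s)^2 / (k n)^2) has_real_derivative
              (2 * a n s * b n s + 2 * b n s * c n s / (k n)^2)) (at s within {0..T})"
        by (simp add: algebra_simps)
    qed
    have E'le: "E' s \<le> E s + h s" if s: "s \<in> {0..T}" for s
    proof -
      have trm: "2 * a n s * b n s + 2 * b n s * c n s / (k n)^2 \<le> ((a n s)^2 + (b n s)^2 / (k n)^2) + (f n s)^2"
        if n: "n \<in> S" for n
      proof -
        have kp: "0 < (k n)^2" using k1[OF S1[OF n]] by linarith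
        have "2 * a n s * b n s + 2 * b n s * c n s / (k n)^2 = 2 * a n s * b n s + 2 * b n s * (- ((k n)^2) * a n s - f n s) / (k n)^2"
          using cf[OF S1[OF n] s] by simp
        also have "\<dots> = 2 * a n s * b n s + (- 2 * a n s * b n s) * ((k n)^2 / (k n)^2) - 2 * b n s * f n s / (k n)^2"
          by (simp add: algebra_simps diff_divide_distrib)
        also have "\<dots> = - 2 * b n s * f n s / (k n)^2" using kp by simp
        also have "\<dots> \<le> ((b n s)^2 + (f n s)^2) / (k n)^2"
        proof -
          have "0 \<le> (b n s + f n s)^2" by simp
          then have "- 2 * b n s * f n s \<le> (b n s)^2 + (f n s)^2"
            by (simp add: power2_eq_square algebra_simps)
          then show ?thesis using kp by (intro divide_right_mono) auto
        qed
        also have "\<dots> = (b n s)^2 / (k n)^2 + (f n s)^2 / (k n)^2" by (simp add: add_divide_distrib)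
        also have "\<dots> \<le> (b n s)^2 / (k n)^2 + (f n s)^2"
        proof -
          have "(f n s)^2 / (k n)^2 \<le> (f n s)^2"
            using k1[OF S1[OF n]] by (simp add: divide_le_eq mult_le_cancel_left1)
          then show ?thesis by simp
        qed
        finally show ?thesis by (smt (verit) zero_le_power2)
      qed
      have "E' s \<le> (\<Sum>n\<in>S. ((a n s)^2 + (b n s)^2 / (k n)^2) + (f n s)^2)"
        unfolding E'_def by (intro sum_mono trm)
      also have "\<dots> = E s + (\<Sum>n\<in>S. (f n s)^2)" unfolding E_def by (simp add: sum.distrib)
      also have "(\<Sum>n\<in>S. (f n s)^2) \<le> (\<Sum>n\<in>S. 2 * (f n s)^2)" by (intro sum_mono) simp
      also have "\<dots> = (\<Sum>n<N. 2 * (LINT x|M01. r s x * phi n x)^2)"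
        unfolding S_def f_def inner_01_def by (rule sum_drop0[symmetric]) simp
      also have "\<dots> \<le> (LINT x|M01. (r s x)^2)" by (rule bessel[OF rL[OF s]])
      also have "\<dots> \<le> h s" using hb[OF s] unfolding r_def .
      finally show ?thesis by simp
    qed
    define g where "g s = exp (- s) * E s - H s" for s
    define g' where "g' s = exp (- s) * E' s + (- exp (- s)) * E s - h s" for s
    have dg: "(g has_real_derivative g' s) (at s within {0..T})" if s: "s \<in> {0..T}" for s
    proof -
      have de: "((\<lambda>s. exp (- s)) has_real_derivative - exp (- s)) (at s within {0..T})"
        by (auto intro!: derivative_eq_intros)
      have dH: "(H has_real_derivative h s) (at s within {0..T})"
        unfolding H_def using integral_has_real_derivative[OF hc s] .
      show ?thesis unfolding g_def[abs_def] g'_def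
        using DERIV_diff[OF DERIV_mult'[OF de dE[OF s]] dH] by (simp add: algebra_simps)
    qed
    have g'le: "g' s \<le> 0" if s: "s \<in> {0..T}" for s
    proof -
      have "g' s = exp (- s) * (E' s - E s) - h s" unfolding g'_def by (simp add: algebra_simps)
      also have "\<dots> \<le> exp (- s) * h s - h s"
        using E'le[OF s] by (intro diff_right_mono mult_left_mono) auto
      also have "\<dots> \<le> 0"
      proof -
        have "exp (- s) \<le> 1" using s by simp
        then have "exp (- s) * h s \<le> 1 * h s" using h0[OF s] by (intro mult_right_mono) auto
        then show ?thesis by simp
      qed
      finally show ?thesis .
    qed
    have t0: "0 \<le> t" "t \<le> T" using t by auto
    obtain \<xi> where xi: "\<xi> \<in> {0..t}" "g t - g 0 = g' \<xi> * (t - 0)"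
    proof -
      have "\<exists>x\<in>{0..t}. g t - g 0 = (\<lambda>d. g' x * d) (t - 0)"
      proof (rule mvt_very_simple[OF t0(1)])
        fix x assume x: "0 \<le> x" "x \<le> t"
        then have "x \<in> {0..T}" using t0 by auto
        from DERIV_subset[OF dg[OF this], of "{0..t}"] x t0
        show "(g has_derivative (\<lambda>d. g' x * d)) (at x within {0..t})"
          by (auto simp: has_field_derivative_def mult_commute_abs)
      qed
      then show ?thesis using that by auto
    qed
    have "g' \<xi> \<le> 0" using g'le xi(1) t0 by auto
    then have "g t \<le> g 0" using xi(2) t0 by (smt (verit) mult_nonpos_nonneg)
    then have "exp (- t) * E t - H t \<le> E 0" unfolding g_def H_def by simp
    then have "exp (- t) * E t \<le> E 0 + H t" by simp
    then have "exp t * (exp (- t) * E t) \<le> exp t * (E 0 + H t)" by (intro mult_left_mono) auto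
    then have Et: "E t \<le> exp t * (E 0 + H t)" by (simp add: exp_minus field_simps)
    have E0: "E 0 \<le> D"
    proof -
      have "E 0 \<le> (\<Sum>n\<in>S. (inner_01 (\<lambda>x. u0 x - u0' x) (phi n))^2 + (inner_01 (\<lambda>x. u1 x - u1' x) (phi n))^2)"
        unfolding E_def
      proof (intro sum_mono)
        fix n assume n: "n \<in> S"
        have "(b n 0)^2 / (k n)^2 \<le> (b n 0)^2"
          using k1[OF S1[OF n]] by (simp add: divide_le_eq) (metis mult_le_cancel_left1 mult.commute zero_le_power2 mult_right_mono mult_1)
        then show "(a n 0)^2 + (b n 0)^2 / (k n)^2 \<le> (inner_01 (\<lambda>x. u0 x - u0' x) (phi n))^2 + (inner_01 (\<lambda>x. u1 x - u1' x) (phi n))^2"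
          using a0[OF S1[OF n]] b0[OF S1[OF n]] by simp
      qed
      also have "\<dots> = ((\<Sum>n<N. 2 * (LINT x|M01. (u0 x - u0' x) * phi n x)^2) + (\<Sum>n<N. 2 * (LINT x|M01. (u1 x - u1' x) * phi n x)^2)) / 2"
        unfolding S_def inner_01_def
        by (simp add: sum_drop0[where N=N] sum.distrib sum_distrib_left[symmetric])
      also have "\<dots> \<le> D" unfolding D_def
        by (intro divide_right_mono add_mono bessel L2_diff L) simp
      finally show ?thesis .
    qed
    have "(\<Sum>n\<in>{1..<N}. (a n t)^2) \<le> E t"
      unfolding E_def S_def by (intro sum_mono) simp
    also have "\<dots> \<le> exp t * (D + H t)" using Et E0 by (smt (verit) exp_gt_zero mult_left_mono)
    finally show ?thesis .
  qed
  show ?thesis unfolding D_def[symmetric] H_def[symmetric]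
  proof (rule field_le_epsilon)
    fix e :: real assume e: "e > 0"
    have WL: "L2_01 (\<lambda>x. u t x - u' t x)" using uL[OF t] by (intro L2_diff)
    obtain N where N: "(LINT x|M01. (u t x - u' t x)^2) \<le> (\<Sum>n<N. 2 * (LINT x|M01. (u t x - u' t x) * phi n x)^2) + e"
      using parseval_approx[OF WL e] by blast
    have "(\<Sum>n<N. 2 * (LINT x|M01. (u t x - u' t x) * phi n x)^2) = (\<Sum>n\<in>{1..<N}. 2 * (a n t)^2)"
    proof -
      have "(\<Sum>n<N. 2 * (LINT x|M01. (u t x - u' t x) * phi n x)^2) = (\<Sum>n\<in>{1..<N}. 2 * (LINT x|M01. (u t x - u' t x) * phi n x)^2)"
        by (rule sum_drop0) simp
      also have "\<dots> = (\<Sum>n\<in>{1..<N}. 2 * (a n t)^2)"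
        unfolding a_def using inner_diff[OF uL[OF t] L2_phi] by (simp add: inner_01_def)
      finally show ?thesis .
    qed
    also have "\<dots> = 2 * (\<Sum>n\<in>{1..<N}. (a n t)^2)" by (simp add: sum_distrib_left)
    also have "\<dots> \<le> 2 * (exp t * (D + H t))" using claim[of N] by simp
    finally show "(LINT x|M01. (u t x - u' t x)^2) \<le> 2 * exp t * (D + H t) + e" using N by simp
  qed
qed

lemma deriv_nonpos_dec:
  assumes d: "\<And>s. s \<in> {0..T} \<Longrightarrow> (g has_real_derivative g' s) (at s within {0..T})"
    and n: "\<And>s. s \<in> {0..T} \<Longrightarrow> g' s \<le> 0" and t: "t \<in> {0..(T::real)}"
  shows "g t \<le> g 0"
proof -
  have t0: "0 \<le> t" "t \<le> T" using t by auto
  have "\<exists>x\<in>{0..t}. g t - g 0 = (\<lambda>d. g' x * d) (t - 0)"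
  proof (rule mvt_very_simple[OF t0(1)])
    fix x assume x: "0 \<le> x" "x \<le> t"
    then have "x \<in> {0..T}" using t0 by auto
    from DERIV_subset[OF d[OF this], of "{0..t}"] x t0
    show "(g has_derivative (\<lambda>d. g' x * d)) (at x within {0..t})"
      by (auto simp: has_field_derivative_def mult_commute_abs)
  qed
  then obtain x where x: "x \<in> {0..t}" "g t - g 0 = g' x * t" by auto
  have "g' x \<le> 0" using n x(1) t0 by auto
  then show ?thesis using x(2) t0 by (smt (verit) mult_nonpos_nonneg)
qed

lemma gronwall:
  assumes yc: "continuous_on {0..T} y" and b: "\<beta> > 0"
    and hy: "\<And>t. t \<in> {0..T} \<Longrightarrow> y t \<le> \<alpha> + \<beta> * integral {0..t} y"
    and t: "t \<in> {0..(T::real)}"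
  shows "y t \<le> \<alpha> * exp (\<beta> * t)"
proof -
  define Y where "Y s = integral {0..s} y" for s
  define Z where "Z s = exp (- \<beta> * s) * (Y s + \<alpha> / \<beta>)" for s
  define Z' where "Z' s = exp (- \<beta> * s) * y s + (- \<beta> * exp (- \<beta> * s)) * (Y s + \<alpha> / \<beta>)" for s
  have dZ: "(Z has_real_derivative Z' s) (at s within {0..T})" if s: "s \<in> {0..T}" for s
  proof -
    have de: "((\<lambda>s. exp (- \<beta> * s)) has_real_derivative - \<beta> * exp (- \<beta> * s)) (at s within {0..T})"
      by (auto intro!: derivative_eq_intros)
    have dY: "((\<lambda>s. Y s + \<alpha> / \<beta>) has_real_derivative y s) (at s within {0..T})"
      unfolding Y_def using DERIV_add[OF integral_has_real_derivative[OF yc s] DERIV_const] by simp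
    show ?thesis unfolding Z_def[abs_def] Z'_def using DERIV_mult[OF de dY] by (simp add: algebra_simps)
  qed
  have nZ: "Z' s \<le> 0" if s: "s \<in> {0..T}" for s
  proof -
    have "Z' s = exp (- \<beta> * s) * (y s - (\<alpha> + \<beta> * Y s))" unfolding Z'_def using b by (simp add: field_simps)
    also have "\<dots> \<le> 0" using hy[OF s] unfolding Y_def by (intro mult_nonneg_nonpos) auto
    finally show ?thesis .
  qed
  have "Z t \<le> Z 0" by (rule deriv_nonpos_dec[OF dZ nZ t])
  then have "exp (- \<beta> * t) * (Y t + \<alpha> / \<beta>) \<le> \<alpha> / \<beta>" unfolding Z_def Y_def by simp
  then have "exp (\<beta> * t) * (exp (- \<beta> * t) * (Y t + \<alpha> / \<beta>)) \<le> exp (\<beta> * t) * (\<alpha> / \<beta>)"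
    by (intro mult_left_mono) auto
  then have "Y t + \<alpha> / \<beta> \<le> exp (\<beta> * t) * (\<alpha> / \<beta>)"
    by (simp add: mult.assoc[symmetric] exp_add[symmetric])
  then have "\<beta> * (Y t + \<alpha> / \<beta>) \<le> \<beta> * (exp (\<beta> * t) * (\<alpha> / \<beta>))"
    using b by (intro mult_left_mono) auto
  then have "\<beta> * Y t + \<alpha> \<le> \<alpha> * exp (\<beta> * t)" using b by (simp add: distrib_left mult.commute)
  then show ?thesis using hy[OF t] unfolding Y_def by simp
qed

lemma cont_bound_T: assumes "continuous_on {0..T} (h::real\<Rightarrow>real)"
  obtains B where "B \<ge> 0" "\<And>x. x \<in> {0..T} \<Longrightarrow> \<bar>h x\<bar> \<le> B"
proof -
  have "bounded (h ` {0..T})" by (intro compact_imp_bounded compact_continuous_image assms) auto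
  then obtain B where "\<forall>y\<in>h ` {0..T}. norm y \<le> B" unfolding bounded_iff by blast
  then have "\<And>x. x \<in> {0..T} \<Longrightarrow> \<bar>h x\<bar> \<le> max B 0" by force
  then show ?thesis using that[of "max B 0"] by auto
qed

lemma sq_sum_le: "((a::real) + b)^2 \<le> 2 * a^2 + 2 * b^2"
proof -
  have "0 \<le> (a - b)^2" by simp
  then show ?thesis by (simp add: power2_eq_square algebra_simps)
qed

lemma stab:
  fixes u u' :: "real \<Rightarrow> real \<Rightarrow> real"
  assumes W1: "wave_sol T q u0 u1 u" and W2: "wave_sol T q' u0' u1' u'"
    and q: "Linf_01 q" and q': "Linf_01 q'"
    and L: "L2_01 u0" "L2_01 u1" "L2_01 u0'" "L2_01 u1'"
    and T: "T > 0" and M: "M \<ge> 0" "AE x in M01. \<bar>q' x\<bar> \<le> M"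
    and d: "\<delta> \<ge> 0" "AE x in M01. \<bar>q x - q' x\<bar> \<le> \<delta>"
    and Ub: "\<And>t. t \<in> {0..T} \<Longrightarrow> (LINT x|M01. (u t x)^2) \<le> Ub"
    and t: "t \<in> {0..T}"
  shows "(LINT x|M01. (u t x - u' t x)^2) \<le> 2 * exp T * exp (4 * exp T * (M^2 + 1) * T) *
     (((LINT x|M01. (u0 x - u0' x)^2) + (LINT x|M01. (u1 x - u1' x)^2)) / 2 + 2 * \<delta>^2 * T * Ub)"
proof -
  define D where "D = ((LINT x|M01. (u0 x - u0' x)^2) + (LINT x|M01. (u1 x - u1' x)^2)) / 2"
  define y where "y s = (LINT x|M01. (u s x - u' s x)^2)" for s
  define U where "U s = (LINT x|M01. (u s x)^2)" for s
  define h where "h s = 2 * M^2 * y s + 2 * \<delta>^2 * U s" for s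
  define \<beta> where "\<beta> = 4 * exp T * (M^2 + 1)"
  define \<alpha> where "\<alpha> = 2 * exp T * (D + 2 * \<delta>^2 * T * Ub)"
  have uL: "L2_01 (u s)" "L2_01 (u' s)" if "s \<in> {0..T}" for s
    using wave_L2[OF W1 that] wave_L2[OF W2 that] by auto
  have yc: "continuous_on {0..T} y" unfolding y_def by (rule cont_y[OF W1 W2])
  have Uc: "continuous_on {0..T} U" unfolding U_def by (rule cont_U[OF W1])
  have hc: "continuous_on {0..T} h" unfolding h_def by (intro continuous_intros yc Uc)
  have y0: "0 \<le> y s" for s unfolding y_def by (simp add: integral_nonneg_AE)
  have U0: "0 \<le> U s" for s unfolding U_def by (simp add: integral_nonneg_AE)
  have h0: "0 \<le> h s" for s unfolding h_def using y0[of s] U0[of s] by simp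
  have D0: "0 \<le> D" unfolding D_def by (simp add: integral_nonneg_AE)
  have hb: "(LINT x|M01. (q x * u s x - q' x * u' s x)^2) \<le> h s" if s: "s \<in> {0..T}" for s
  proof -
    have "(LINT x|M01. (q x * u s x - q' x * u' s x)^2) \<le> (LINT x|M01. (2 * M^2) * (u s x - u' s x)^2 + (2 * \<delta>^2) * (u s x)^2)"
    proof (rule integral_mono_AE)
      show "integrable M01 (\<lambda>x. (q x * u s x - q' x * u' s x)^2)"
        by (intro L2_sq L2_diff Linf_L2mult q q' uL s)
      show "integrable M01 (\<lambda>x. (2 * M^2) * (u s x - u' s x)^2 + (2 * \<delta>^2) * (u s x)^2)"
        by (intro Bochner_Integration.integrable_add integrable_mult_right L2_sq L2_diff uL s)
      show "AE x in M01. (q x * u s x - q' x * u' s x)^2 \<le> (2 * M^2) * (u s x - u' s x)^2 + (2 * \<delta>^2) * (u s x)^2"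
        using M(2) d(2)
      proof eventually_elim
        case (elim x)
        have e: "q x * u s x - q' x * u' s x = q' x * (u s x - u' s x) + (q x - q' x) * u s x"
          by (simp add: algebra_simps)
        have s1: "(q x * u s x - q' x * u' s x)^2 \<le> 2 * (q' x * (u s x - u' s x))^2 + 2 * ((q x - q' x) * u s x)^2"
          unfolding e by (rule sq_sum_le)
        have a1: "(q' x * (u s x - u' s x))^2 \<le> M^2 * (u s x - u' s x)^2"
        proof -
          have "\<bar>q' x\<bar>^2 \<le> M^2" by (rule power_mono) (use elim(1) in auto)
          then have "(q' x)^2 \<le> M^2" by simp
          then show ?thesis by (simp add: power_mult_distrib mult_right_mono)
        qed
        have a2: "((q x - q' x) * u s x)^2 \<le> \<delta>^2 * (u s x)^2"
        proof -
          have "\<bar>q x - q' x\<bar>^2 \<le> \<delta>^2" by (rule power_mono) (use elim(2) in auto)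
          then have "(q x - q' x)^2 \<le> \<delta>^2" by simp
          then show ?thesis by (simp add: power_mult_distrib mult_right_mono)
        qed
        show ?case using s1 a1 a2 by linarith
      qed
    qed
    also have "\<dots> = h s" unfolding h_def y_def U_def
      using int_sq_diff[OF uL(1,2)[OF s]] L2_sq[OF uL(1)[OF s]] by simp
    finally show ?thesis .
  qed
  have Ub00: "0 \<le> Ub"
  proof -
    have "U 0 \<le> Ub" using Ub[of 0] T by (simp add: U_def)
    then show ?thesis using U0[of 0] by linarith
  qed
  have main: "y s \<le> \<alpha> + \<beta> * integral {0..s} y" if s: "s \<in> {0..T}" for s
  proof -
    have s0: "0 \<le> s" "s \<le> T" using s by auto
    have sub: "{0..s} \<subseteq> {0..T}" using s0 by auto
    have iy: "y integrable_on {0..s}" by (intro integrable_continuous_interval continuous_on_subset[OF yc sub])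
    have iU: "U integrable_on {0..s}" by (intro integrable_continuous_interval continuous_on_subset[OF Uc sub])
    have Yp: "0 \<le> integral {0..s} y" by (rule integral_nonneg[OF iy]) (simp add: y0)
    have IU: "integral {0..s} U \<le> Ub * s"
    proof -
      have "integral {0..s} U \<le> integral {0..s} (\<lambda>_. Ub)"
        by (rule integral_le[OF iU]) (use Ub s0 in \<open>auto simp: U_def\<close>)
      then show ?thesis using s0 by (simp add: mult.commute)
    qed
    have H: "integral {0..s} h = 2 * M^2 * integral {0..s} y + 2 * \<delta>^2 * integral {0..s} U"
      unfolding h_def[abs_def] using iy iU by (subst integral_add) (auto intro!: integrable_on_mult_right)
    have Ub0: "0 \<le> Ub" by (rule Ub00)
    have "y s \<le> 2 * exp s * (D + integral {0..s} h)"
      unfolding y_def D_def by (rule energy[OF W1 W2 q q' L hc h0 hb s])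
    also have "\<dots> \<le> 2 * exp T * (D + integral {0..s} h)"
    proof -
      have "0 \<le> integral {0..s} h" using H Yp IU
        by (simp add: integral_nonneg[OF iU] U0)
      then show ?thesis using D0 s0 by (intro mult_right_mono mult_left_mono) auto
    qed
    also have "\<dots> \<le> 2 * exp T * (D + (2 * M^2 * integral {0..s} y + 2 * \<delta>^2 * (Ub * T)))"
    proof -
      have "integral {0..s} U \<le> Ub * T" using IU Ub0 s0 by (smt (verit) mult_left_mono)
      then have "integral {0..s} h \<le> 2 * M^2 * integral {0..s} y + 2 * \<delta>^2 * (Ub * T)"
        unfolding H by (intro add_left_mono mult_left_mono) auto
      then show ?thesis by (intro mult_left_mono add_left_mono) auto
    qed
    also have "\<dots> = \<alpha> + 4 * exp T * M^2 * integral {0..s} y"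
      unfolding \<alpha>_def by (simp add: algebra_simps)
    also have "\<dots> \<le> \<alpha> + \<beta> * integral {0..s} y"
      unfolding \<beta>_def using Yp by (intro add_left_mono mult_right_mono) auto
    finally show ?thesis .
  qed
  have "y t \<le> \<alpha> * exp (\<beta> * t)"
  proof (rule gronwall[OF yc _ main t])
    have "0 < M^2 + 1" by (simp add: add_nonneg_pos)
    then show "0 < \<beta>" unfolding \<beta>_def by simp
  qed
  also have "\<dots> \<le> \<alpha> * exp (\<beta> * T)"
  proof -
    have "0 \<le> \<alpha>" unfolding \<alpha>_def using D0 d(1) T Ub00 by simp
    moreover have "\<beta> * t \<le> \<beta> * T" using t by (intro mult_left_mono) (auto simp: \<beta>_def)
    ultimately show ?thesis by (intro mult_left_mono) auto
  qed
  also have "\<alpha> * exp (\<beta> * T) = 2 * exp T * exp (4 * exp T * (M^2 + 1) * T) * (D + 2 * \<delta>^2 * T * Ub)"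
    unfolding \<alpha>_def \<beta>_def by (simp only: mult_ac)
  finally show ?thesis unfolding y_def D_def .
qed

theorem theorem5:
  fixes T :: real
    and q u0 u1 :: "real \<Rightarrow> real"
    and u :: "real \<Rightarrow> real \<Rightarrow> real"
    and q\<epsilon> u0\<epsilon> u1\<epsilon> :: "real \<Rightarrow> real \<Rightarrow> real"
    and u\<epsilon> :: "real \<Rightarrow> real \<Rightarrow> real \<Rightarrow> real"
  assumes "T > 0"
    and "Linf_01 q" and "L2_01 u0" and "L2_01 u1"
    and "wave_sol T q u0 u1 u"
    and "\<forall>\<epsilon>\<in>{0<..1}. Linf_01 (q\<epsilon> \<epsilon>) \<and> L2_01 (u0\<epsilon> \<epsilon>) \<and> L2_01 (u1\<epsilon> \<epsilon>)"
    and "((\<lambda>\<epsilon>. Linfnorm_01 (\<lambda>x. q x - q\<epsilon> \<epsilon> x)) \<longlongrightarrow> 0) (at_right 0)"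
    and "((\<lambda>\<epsilon>. L2norm_01 (\<lambda>x. u0 x - u0\<epsilon> \<epsilon> x)) \<longlongrightarrow> 0) (at_right 0)"
    and "((\<lambda>\<epsilon>. L2norm_01 (\<lambda>x. u1 x - u1\<epsilon> \<epsilon> x)) \<longlongrightarrow> 0) (at_right 0)"
    and "\<forall>\<epsilon>\<in>{0<..1}. wave_sol T (q\<epsilon> \<epsilon>) (u0\<epsilon> \<epsilon>) (u1\<epsilon> \<epsilon>) (u\<epsilon> \<epsilon>)"
  shows "((\<lambda>\<epsilon>. SUP t\<in>{0..T}. L2norm_01 (\<lambda>x. u t x - u\<epsilon> \<epsilon> t x)) \<longlongrightarrow> 0) (at_right 0)"
proof -
  note T = assms(1) and q = assms(2) and L0 = assms(3) and L1 = assms(4) and W = assms(5)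
    and epsP = assms(6) and tq = assms(7) and t0 = assms(8) and t1 = assms(9) and We = assms(10)
  obtain Cq where Cq: "AE x in M01. \<bar>q x\<bar> \<le> Cq" using q unfolding Linf_01_def by blast
  define M where "M = max Cq 0 + 1"
  have M0: "M \<ge> 0" unfolding M_def by simp
  obtain Ub0 where Ub0: "Ub0 \<ge> 0" "\<And>t. t \<in> {0..T} \<Longrightarrow> \<bar>LINT x|M01. (u t x)^2\<bar> \<le> Ub0"
    using cont_bound_T[OF cont_U[OF W]] by blast
  have Ub: "\<And>t. t \<in> {0..T} \<Longrightarrow> (LINT x|M01. (u t x)^2) \<le> Ub0" using Ub0(2) by force
  define K where "K = 2 * exp T * exp (4 * exp T * (M^2 + 1) * T)"
  have K0: "K > 0" unfolding K_def by simp
  define P where "P = K * (1 + 2 * T * Ub0)"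
  have P0: "P > 0" unfolding P_def using K0 T Ub0(1) by (simp add: add_pos_nonneg)
  define F where "F \<epsilon> = (SUP t\<in>{0..T}. L2norm_01 (\<lambda>x. u t x - u\<epsilon> \<epsilon> t x))" for \<epsilon>
  have key: "\<forall>\<^sub>F \<epsilon> in at_right 0. 0 \<le> F \<epsilon> \<and> F \<epsilon> < \<eta>" if \<eta>: "\<eta> > 0" for \<eta>
  proof -
    define c where "c = min 1 (\<eta> / (2 * sqrt P))"
    have c0: "c > 0" "c \<le> 1" "c \<le> \<eta> / (2 * sqrt P)" unfolding c_def using \<eta> P0 by auto
    have e1: "\<forall>\<^sub>F \<epsilon> in at_right 0. \<epsilon> \<in> {0<..1::real}"
      unfolding eventually_at_right_field by (rule exI[of _ 1]) auto
    have e2: "\<forall>\<^sub>F \<epsilon> in at_right 0. Linfnorm_01 (\<lambda>x. q x - q\<epsilon> \<epsilon> x) < ereal c"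
      using order_tendstoD(2)[OF tq] c0 by simp
    have e3: "\<forall>\<^sub>F \<epsilon> in at_right 0. L2norm_01 (\<lambda>x. u0 x - u0\<epsilon> \<epsilon> x) < c"
      using order_tendstoD(2)[OF t0] c0 by simp
    have e4: "\<forall>\<^sub>F \<epsilon> in at_right 0. L2norm_01 (\<lambda>x. u1 x - u1\<epsilon> \<epsilon> x) < c"
      using order_tendstoD(2)[OF t1] c0 by simp
    show ?thesis using e1 e2 e3 e4
    proof eventually_elim
      case (elim \<epsilon>)
      note E = elim
      have qe: "Linf_01 (q\<epsilon> \<epsilon>)" and Le0: "L2_01 (u0\<epsilon> \<epsilon>)" and Le1: "L2_01 (u1\<epsilon> \<epsilon>)"
        using epsP elim(1) by auto
      have Wee: "wave_sol T (q\<epsilon> \<epsilon>) (u0\<epsilon> \<epsilon>) (u1\<epsilon> \<epsilon>) (u\<epsilon> \<epsilon>)" using We elim(1) by auto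
      have AEd: "AE x in M01. \<bar>q x - q\<epsilon> \<epsilon> x\<bar> \<le> c"
        using esssup_AE[of "\<lambda>x. ereal \<bar>q x - q\<epsilon> \<epsilon> x\<bar>" M01]
      proof eventually_elim
        case (elim x)
        have "ereal \<bar>q x - q\<epsilon> \<epsilon> x\<bar> < ereal c"
          using elim E(2) unfolding Linfnorm_01_def by (rule le_less_trans)
        then show ?case by simp
      qed
      have AEM: "AE x in M01. \<bar>q\<epsilon> \<epsilon> x\<bar> \<le> M"
        using AEd Cq
      proof eventually_elim
        case (elim x)
        have "\<bar>q\<epsilon> \<epsilon> x\<bar> \<le> \<bar>q x\<bar> + \<bar>q x - q\<epsilon> \<epsilon> x\<bar>" by linarith
        then show ?case using elim c0 unfolding M_def by linarith
      qed
      define D where "D = ((LINT x|M01. (u0 x - u0\<epsilon> \<epsilon> x)^2) + (LINT x|M01. (u1 x - u1\<epsilon> \<epsilon> x)^2)) / 2"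
      have D: "D \<le> c^2"
      proof -
        have a: "(L2norm_01 (\<lambda>x. u0 x - u0\<epsilon> \<epsilon> x))^2 \<le> c^2"
          using E(3) L2norm_nonneg by (intro power_mono) auto
        have b: "(L2norm_01 (\<lambda>x. u1 x - u1\<epsilon> \<epsilon> x))^2 \<le> c^2"
          using E(4) L2norm_nonneg by (intro power_mono) auto
        show ?thesis using a b unfolding D_def norm_sq by simp
      qed
      have bound: "L2norm_01 (\<lambda>x. u t x - u\<epsilon> \<epsilon> t x) \<le> \<eta> / 2" if t: "t \<in> {0..T}" for t
      proof -
        have "(LINT x|M01. (u t x - u\<epsilon> \<epsilon> t x)^2) \<le> K * (D + 2 * c^2 * T * Ub0)"
          unfolding K_def D_def
          by (rule stab[OF W Wee q qe L0 L1 Le0 Le1 T M0 AEM _ AEd Ub t]) (use c0 in simp)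
        also have "\<dots> \<le> K * (c^2 + 2 * c^2 * T * Ub0)"
          using D K0 by (intro mult_left_mono add_right_mono) auto
        also have "\<dots> = c^2 * P" unfolding P_def by (simp add: algebra_simps)
        finally have y: "(LINT x|M01. (u t x - u\<epsilon> \<epsilon> t x)^2) \<le> c^2 * P" .
        have "L2norm_01 (\<lambda>x. u t x - u\<epsilon> \<epsilon> t x) \<le> sqrt (c^2 * P)"
          unfolding L2norm_01_def using y by (rule real_sqrt_le_mono)
        also have "\<dots> = c * sqrt P" using c0 by (simp add: real_sqrt_mult)
        also have "\<dots> \<le> \<eta> / (2 * sqrt P) * sqrt P" using c0 P0 by (intro mult_right_mono) auto
        also have "\<dots> = \<eta> / 2" using P0 by simp
        finally show ?thesis .
      qed
      have bdd: "bdd_above ((\<lambda>t. L2norm_01 (\<lambda>x. u t x - u\<epsilon> \<epsilon> t x)) ` {0..T})"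
        using bound by (intro bdd_aboveI2[where M="\<eta> / 2"]) auto
      have "F \<epsilon> \<le> \<eta> / 2" unfolding F_def
        using T bound by (intro cSUP_least) auto
      moreover have "0 \<le> F \<epsilon>"
      proof -
        have "L2norm_01 (\<lambda>x. u 0 x - u\<epsilon> \<epsilon> 0 x) \<le> F \<epsilon>"
          unfolding F_def using T by (intro cSUP_upper bdd) auto
        then show ?thesis using L2norm_nonneg[of "\<lambda>x. u 0 x - u\<epsilon> \<epsilon> 0 x"] by linarith
      qed
      ultimately show ?case using \<eta> by simp
    qed
  qed
  show ?thesis unfolding F_def[symmetric]
  proof (rule order_tendstoI)
    fix a :: real assume "a < 0"
    show "\<forall>\<^sub>F \<epsilon> in at_right 0. a < F \<epsilon>"
      using key[of 1, OF zero_less_one] by eventually_elim (use \<open>a < 0\<close> in auto)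
  next
    fix a :: real assume "0 < a"
    show "\<forall>\<^sub>F \<epsilon> in at_right 0. F \<epsilon> < a"
      using key[OF \<open>0 < a\<close>] by eventually_elim auto
  qed
qed

end
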